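(* Let $1<\alpha<2$, $|\beta|\le1$, $\sigma>0$, and let $X$ have the geometric stable distribution with characteristic function $$E[e^{itX}]=\big[1+\sigma^\alpha|t|^\alpha\big(1-i\beta\tan\tfrac{\pi\alpha}{2}\operatorname{sign}(t)\big)\big]^{-1},\quad t\in\mathbb{R}.$$ Put $\theta=\beta\tan\frac{\pi\alpha}{2}$ and let $0<\lambda<\alpha-1$. Then for every $\mu\in\mathbb{R}$, $$E[|X-\mu|^{1+\lambda}]=\frac{\lambda}{\sin(\frac{\lambda\pi}{2})\Gamma(1-\lambda)}\Big[\mu\int_0^\infty u^{-(1+\lambda)}\frac{(1+\sigma^\alpha u^\alpha)\sin\mu u-\theta\sigma^\alpha u^\alpha\cos\mu u}{(1+\sigma^\alpha u^\alpha)^2+(\theta\sigma^\alpha u^\alpha)^2}\,du-\alpha\sigma^\alpha\int_0^\infty u^{\alpha-\lambda-2}\frac{\cos\mu u+\theta\sin\mu u}{(1+\sigma^\alpha u^\alpha)^2+(\theta\sigma^\alpha u^\alpha)^2}\,du$$ $$+2\alpha\sigma^\alpha\int_0^\infty u^{\alpha-\lambda-2}\frac{\{(1+\sigma^\alpha u^\alpha)\cos\mu u+\theta\sigma^\alpha u^\alpha\sin\mu u\}\{1+\sigma^\alpha u^\alpha+\theta^2\sigma^\alpha u^\alpha\}}{\{(1+\sigma^\alpha u^\alpha)^2+(\theta\sigma^\alpha u^\alpha)^2\}^2}\,du\Big]$$ and $$E[|X|^{1+\lambda}]=\frac{\lambda\sigma^{1+\lambda}}{\sin(\frac{\lambda\pi}{2})\Gamma(1-\lambda)}\int_0^\infty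 v^{-\frac{1+\lambda}{\alpha}}\frac{(1+v)^2+(\theta v)^2+2\theta^2v}{\{(1+v)^2+(\theta v)^2\}^2}\,dv.$$
   Context: $\Gamma$ denotes the Gamma function. *)

theory Defs
  imports "HOL-Probability.Probability"
begin

end

theory Submission
  imports Defs
begin


lemma powr_set_integrable_01:
  assumes "-1 < (a::real)"
  shows "set_integrable lborel {0<..1} (\<lambda>t. t powr a)"
proof -
  have "(\<lambda>t. t powr a) integrable_on {0<..1}"
    by (rule integrable_on_powr_from_0') (use assms in auto)
  hence "(\<lambda>t. t powr a) absolutely_integrable_on {0<..1}"
    by (subst absolutely_integrable_on_iff_nonneg) auto
  thus ?thesis unfolding set_integrable_def
    by (subst (asm) integrable_completion) auto
qed

lemma powr_set_integrable_1inf: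
  assumes "(b::real) < -1"
  shows "set_integrable lborel {1..} (\<lambda>t. t powr b)"
proof -
  have "(\<lambda>t. t powr b) integrable_on {1..}"
    using has_integral_powr_to_inf[OF assms, of 1] by (auto simp: integrable_on_def)
  hence "(\<lambda>t. t powr b) absolutely_integrable_on {1..}"
    by (subst absolutely_integrable_on_iff_nonneg) auto
  thus ?thesis unfolding set_integrable_def
    by (subst (asm) integrable_completion) auto
qed

definition domf :: "real \<Rightarrow> real \<Rightarrow> real \<Rightarrow> real" where
  "domf a b t = (if t \<le> 1 then t powr a else t powr b)"

lemma domf_nonneg: "0 \<le> domf a b t" by (simp add: domf_def)

lemma domf_integrable:
  assumes "-1 < a" "b < -1"
  shows "set_integrable lborel {0<..} (domf a b)"
proof -
  have I1: "set_integrable lborel {0<..1} (domf a b)"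
  proof -
    have "set_integrable lborel {0<..1} (domf a b) = set_integrable lborel {0<..1} (\<lambda>t. t powr a)"
      by (rule set_integrable_cong) (auto simp: domf_def)
    thus ?thesis using powr_set_integrable_01[OF assms(1)] by simp
  qed
  have I2: "set_integrable lborel {1<..} (domf a b)"
  proof -
    have "set_integrable lborel {1<..} (\<lambda>t. t powr b)"
      by (rule set_integrable_subset[OF powr_set_integrable_1inf[OF assms(2)]]) auto
    moreover have "set_integrable lborel {1<..} (domf a b) = set_integrable lborel {1<..} (\<lambda>t. t powr b)"
      by (rule set_integrable_cong) (auto simp: domf_def)
    ultimately show ?thesis by simp
  qed
  have "set_integrable lborel ({0<..1} \<union> {1<..}) (domf a b)"
    by (intro set_integrable_Un I1 I2) auto
  also have "{0<..1} \<union> {1<..} = {0::real<..}" by auto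
  finally show ?thesis .
qed

lemma set_integrable_by_domf:
  fixes f :: "real \<Rightarrow> real"
  assumes "-1 < a" "b < -1"
    and meas: "set_borel_measurable lborel {0<..} f"
    and bnd: "\<And>t. 0 < t \<Longrightarrow> \<bar>f t\<bar> \<le> c * domf a b t"
  shows "set_integrable lborel {0<..} f"
proof -
  have "set_integrable lborel {0<..} (\<lambda>t. c * domf a b t)"
    using domf_integrable[OF assms(1,2)] by (rule set_integrable_mult_right)
  then show ?thesis
    unfolding set_integrable_def set_borel_measurable_def
    apply (rule Bochner_Integration.integrable_bound)
    using meas unfolding set_borel_measurable_def apply simp
    by (auto intro!: AE_I2 simp: indicator_def intro: order_trans[OF bnd])
qed



lemma Gamma_nn_open:
  assumes "a > 0"
  shows "(\<integral>\<^sup>+x. ennreal (indicator {0<..} x * x powr (a - 1) * exp (- x)) \<partial>lborel) = ennreal (Gamma a)"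
proof -
  have "(\<integral>\<^sup>+x. ennreal (indicator {0<..} x * x powr (a - 1) * exp (- x)) \<partial>lborel)
      = (\<integral>\<^sup>+x. ennreal (indicator {0..} x * x powr (a - 1) / exp x) \<partial>lborel)"
    by (intro nn_integral_cong) (auto simp: indicator_def exp_minus field_simps)
  also have "\<dots> = ennreal (Gamma a)" using Gamma_conv_nn_integral_real[OF assms] by simp
  finally show ?thesis .
qed

lemma Gamma_nn_scaled:
  assumes "a > 0" "c > 0"
  shows "(\<integral>\<^sup>+y. ennreal (indicator {0<..} y * y powr (a - 1) * exp (- (c * y))) \<partial>lborel)
       = ennreal (c powr (-a) * Gamma a)"
proof -
  let ?f = "\<lambda>y. ennreal (indicator {0<..} y * y powr (a - 1) * exp (- (c * y)))"
  have "(\<integral>\<^sup>+y. ?f y \<partial>lborel) = ennreal \<bar>1/c\<bar> * (\<integral>\<^sup>+x. ?f (0 + (1/c) * x) \<partial>lborel)"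
    using assms by (intro nn_integral_real_affine) auto
  also have "(\<integral>\<^sup>+x. ?f (0 + (1/c) * x) \<partial>lborel)
       = (\<integral>\<^sup>+x. ennreal (c powr (1 - a)) * ennreal (indicator {0<..} x * x powr (a - 1) * exp (- x)) \<partial>lborel)"
    using assms
    by (intro nn_integral_cong)
       (auto simp: indicator_def ennreal_mult'[symmetric] powr_divide powr_diff zero_less_mult_iff field_simps)
  also have "\<dots> = ennreal (c powr (1 - a)) * ennreal (Gamma a)"
    by (subst nn_integral_cmult) (auto simp: Gamma_nn_open[OF assms(1)])
  also have "ennreal \<bar>1/c\<bar> * (ennreal (c powr (1 - a)) * ennreal (Gamma a)) = ennreal (c powr (-a) * Gamma a)"
    using assms by (simp add: ennreal_mult'[symmetric] powr_diff powr_minus field_simps)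
  finally show ?thesis .
qed



lemma exp_nn_scaled:
  assumes "c > 0"
  shows "(\<integral>\<^sup>+s. ennreal (indicator {0<..} s * exp (- (c * s))) \<partial>lborel) = ennreal (1 / c)"
proof -
  have "(\<integral>\<^sup>+s. ennreal (indicator {0<..} s * exp (- (c * s))) \<partial>lborel)
     = (\<integral>\<^sup>+s. ennreal (indicator {0<..} s * s powr (1 - 1) * exp (- (c * s))) \<partial>lborel)"
    by (intro nn_integral_cong) (auto simp: indicator_def)
  also have "\<dots> = ennreal (1 / c)" using Gamma_nn_scaled[of 1 c] assms by (simp add: powr_minus divide_inverse)
  finally show ?thesis .
qed

lemma J_value:
  assumes "0 < a" "a < 1"
  shows "(\<integral>\<^sup>+y. ennreal (indicator {0<..} y * y powr (a - 1) / (1 + y)) \<partial>lborel)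
       = ennreal (Gamma a * Gamma (1 - a))"
proof -
  have "(\<integral>\<^sup>+y. ennreal (indicator {0<..} y * y powr (a - 1) / (1 + y)) \<partial>lborel)
      = (\<integral>\<^sup>+y. \<integral>\<^sup>+s. ennreal (indicator {0<..} y * indicator {0<..} s * y powr (a - 1) * exp (- ((1 + y) * s))) \<partial>lborel \<partial>lborel)"
  proof (intro nn_integral_cong)
    fix y :: real
    show "ennreal (indicator {0<..} y * y powr (a - 1) / (1 + y)) =
      (\<integral>\<^sup>+s. ennreal (indicator {0<..} y * indicator {0<..} s * y powr (a - 1) * exp (- ((1 + y) * s))) \<partial>lborel)"
    proof (cases "y > 0")
      case True
      have "(\<integral>\<^sup>+s. ennreal (indicator {0<..} y * indicator {0<..} s * y powr (a - 1) * exp (- ((1 + y) * s))) \<partial>lborel)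
          = (\<integral>\<^sup>+s. ennreal (y powr (a - 1)) * ennreal (indicator {0<..} s * exp (- ((1 + y) * s))) \<partial>lborel)"
        using True by (intro nn_integral_cong) (auto simp: indicator_def ennreal_mult'[symmetric])
      also have "\<dots> = ennreal (y powr (a - 1)) * ennreal (1 / (1 + y))"
        using True by (subst nn_integral_cmult) (auto simp: exp_nn_scaled)
      finally show ?thesis using True by (simp add: ennreal_mult'[symmetric] divide_inverse)
    qed (simp add: indicator_def)
  qed
  also have "\<dots> = (\<integral>\<^sup>+s. \<integral>\<^sup>+y. ennreal (indicator {0<..} y * indicator {0<..} s * y powr (a - 1) * exp (- ((1 + y) * s))) \<partial>lborel \<partial>lborel)"
    by (rule lborel_pair.Fubini'[symmetric]) simp
  also have "\<dots> = (\<integral>\<^sup>+s. ennreal (indicator {0<..} s * s powr ((1 - a) - 1) * exp (- s)) * ennreal (Gamma a) \<partial>lborel)"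
  proof (intro nn_integral_cong)
    fix s :: real
    show "(\<integral>\<^sup>+y. ennreal (indicator {0<..} y * indicator {0<..} s * y powr (a - 1) * exp (- ((1 + y) * s))) \<partial>lborel)
       = ennreal (indicator {0<..} s * s powr ((1 - a) - 1) * exp (- s)) * ennreal (Gamma a)"
    proof (cases "s > 0")
      case True
      have "(\<integral>\<^sup>+y. ennreal (indicator {0<..} y * indicator {0<..} s * y powr (a - 1) * exp (- ((1 + y) * s))) \<partial>lborel)
          = (\<integral>\<^sup>+y. ennreal (exp (- s)) * ennreal (indicator {0<..} y * y powr (a - 1) * exp (- (s * y))) \<partial>lborel)"
        using True by (intro nn_integral_cong) (auto simp: indicator_def ennreal_mult'[symmetric] algebra_simps exp_diff exp_minus divide_inverse)
      also have "\<dots> = ennreal (exp (- s)) * ennreal (s powr (-a) * Gamma a)"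
        using True assms by (subst nn_integral_cmult) (auto simp: Gamma_nn_scaled)
      finally show ?thesis using True assms
        by (simp add: ennreal_mult'[symmetric] mult_ac)
    qed (simp add: indicator_def)
  qed
  also have "\<dots> = ennreal (Gamma (1 - a)) * ennreal (Gamma a)"
    using assms Gamma_nn_open[of "1 - a"] by (subst nn_integral_multc) auto
  also have "\<dots> = ennreal (Gamma a * Gamma (1 - a))"
    using assms by (simp add: ennreal_mult'[symmetric] mult_ac)
  finally show ?thesis .
qed



lemma nn_to_has_integral:
  fixes f :: "real \<Rightarrow> real"
  assumes f: "f \<in> borel_measurable borel" and S: "S \<in> sets borel"
    and nn: "\<And>x. x \<in> S \<Longrightarrow> 0 \<le> f x"
    and eq: "(\<integral>\<^sup>+x. ennreal (indicator S x * f x) \<partial>lborel) = ennreal r" and r: "0 \<le> r"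
  shows "(f has_integral r) S"
proof -
  have "((\<lambda>x. indicator S x * f x) has_integral r) UNIV"
    by (rule nn_integral_has_integral) (use f S nn eq r in \<open>auto simp: indicator_def\<close>)
  hence "((\<lambda>x. if x \<in> S then f x else 0) has_integral r) UNIV"
    by (rule has_integral_eq[rotated]) (auto simp: indicator_def)
  thus ?thesis by (simp add: has_integral_restrict_UNIV)
qed

lemma W_value:
  assumes "0 < p" "p < 2"
  shows "(\<integral>\<^sup>+t. ennreal (indicator {0<..} t * (t powr (1 - p) / (1 + t\<^sup>2))) \<partial>lborel)
       = ennreal (Gamma (p/2) * Gamma (1 - p/2) / 2)"
proof -
  define f where "f = (\<lambda>y::real. y powr (- p / 2) / (1 + y) / 2)"
  define b where "b = Gamma (p/2) * Gamma (1 - p/2) / 2"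
  have b0: "0 \<le> b" unfolding b_def using assms by (intro mult_nonneg_nonneg divide_nonneg_nonneg) auto
  have "(\<integral>\<^sup>+y. ennreal (indicator {0<..} y * f y) \<partial>lborel)
      = (\<integral>\<^sup>+y. ennreal (1/2) * ennreal (indicator {0<..} y * y powr ((1 - p/2) - 1) / (1 + y)) \<partial>lborel)"
    by (intro nn_integral_cong, subst ennreal_mult'[symmetric], simp, rule arg_cong[where f=ennreal])
       (auto simp: f_def indicator_def field_simps)
  also have "\<dots> = ennreal (1/2) * ennreal (Gamma (1 - p/2) * Gamma (1 - (1 - p/2)))"
    using assms J_value[of "1 - p/2"] by (subst nn_integral_cmult) auto
  also have "\<dots> = ennreal (1/2 * (Gamma (1 - p/2) * Gamma (1 - (1 - p/2))))"
    using assms by (intro ennreal_mult[symmetric]) auto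
  also have "\<dots> = ennreal b" unfolding b_def by (simp add: mult_ac)
  finally have hb: "(f has_integral b) {0<..}"
    by (intro nn_to_has_integral b0) (auto simp: f_def)
  have fi: "f absolutely_integrable_on {0<..} \<and> integral {0<..} f = b"
  proof -
    note h = hb
    have "f integrable_on {0<..}" using h by (rule has_integral_integrable)
    moreover have "\<And>x. x \<in> {0<..} \<Longrightarrow> 0 \<le> f x" unfolding f_def by simp
    ultimately have "f absolutely_integrable_on {0<..}" by (subst absolutely_integrable_on_iff_nonneg)
    moreover have "integral {0<..} f = b" using h by (rule integral_unique)
    ultimately show ?thesis by blast
  qed
  have img: "(\<lambda>t::real. t\<^sup>2) ` {0<..} = {0<..}"
  proof (intro equalityI subsetI)
    fix y :: real assume "y \<in> {0<..}"
    thus "y \<in> (\<lambda>t. t\<^sup>2) ` {0<..}" by (intro image_eqI[of _ _ "sqrt y"]) auto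
  qed auto
  have "(\<lambda>x. \<bar>2 * x\<bar> * f (x\<^sup>2)) absolutely_integrable_on {0<..} \<and> integral {0<..} (\<lambda>x. \<bar>2 * x\<bar> * f (x\<^sup>2)) = b"
    using fi
    by (subst has_absolute_integral_change_of_variables_1'[where g="\<lambda>t. t\<^sup>2"])
       (auto intro!: derivative_eq_intros simp: img inj_on_def power2_eq_iff)
  moreover have "\<And>x. x \<in> {0<..} \<Longrightarrow> \<bar>2 * x\<bar> * f (x\<^sup>2) = x powr (1 - p) / (1 + x\<^sup>2)"
  proof -
    fix x :: real assume "x \<in> {0<..}"
    hence x: "x > 0" by simp
    have "(x\<^sup>2) powr (- p / 2) = x powr (- p)"
    proof -
      have "x\<^sup>2 = x powr 2" using x by (simp add: powr_numeral)
      hence "(x\<^sup>2) powr (- p / 2) = x powr (2 * (- p / 2))" by (simp add: powr_powr)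
      thus ?thesis by simp
    qed
    have "x powr (1 - p) = x * x powr (- p)"
      using x by (simp add: powr_diff powr_minus divide_inverse)
    show "\<bar>2 * x\<bar> * f (x\<^sup>2) = x powr (1 - p) / (1 + x\<^sup>2)"
    proof -
      have q: "1 + x\<^sup>2 > 0" by (simp add: add_pos_nonneg)
      have "\<bar>2 * x\<bar> * f (x\<^sup>2) = x * x powr (- p) / (1 + x\<^sup>2)"
        unfolding f_def using x q \<open>(x\<^sup>2) powr (- p / 2) = x powr (- p)\<close> by (simp add: field_simps)
      thus ?thesis using \<open>x powr (1 - p) = x * x powr (- p)\<close> by simp
    qed
  qed
  ultimately have "((\<lambda>x. x powr (1 - p) / (1 + x\<^sup>2)) has_integral b) {0<..}"
    by (metis (no_types, lifting) absolutely_integrable_on_def has_integral_cong has_integral_integrable_integral set_lebesgue_integral_eq_integral(1))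
  from nn_integral_has_integral_lebesgue[OF _ this] show ?thesis unfolding b_def by simp
qed



lemma exp_minus_at_top: "((\<lambda>x::real. exp (- x)) \<longlongrightarrow> 0) at_top"
  by (auto intro!: exp_at_bot[THEN filterlim_compose] simp: filterlim_uminus_at_bot filterlim_ident)

lemma cos_laplace_nn:
  fixes t :: real
  shows "(\<integral>\<^sup>+x. ennreal (indicator {0<..} x * ((1 - cos (t * x)) * exp (- x))) \<partial>lborel) = ennreal (t\<^sup>2 / (1 + t\<^sup>2))"
proof -
  define c where "c = 1 / (1 + t\<^sup>2)"
  define F where "F = (\<lambda>x. - exp (- x) - c * (exp (- x) * (t * sin (t * x) - cos (t * x))))"
  define f where "f = (\<lambda>x. (1 - cos (t * x)) * exp (- x))"
  have pos: "1 + t\<^sup>2 > 0" by (simp add: add_pos_nonneg)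
  have deriv: "DERIV F x :> f x" for x
  proof -
    have "DERIV F x :> (exp (- x) - c * (- exp (- x) * (t * sin (t * x) - cos (t * x)) + exp (- x) * (t * (cos (t * x) * t) + sin (t * x) * t)))"
      unfolding F_def by (auto intro!: derivative_eq_intros)
    moreover have "(exp (- x) - c * (- exp (- x) * (t * sin (t * x) - cos (t * x)) + exp (- x) * (t * (cos (t * x) * t) + sin (t * x) * t))) = f x"
      unfolding f_def c_def using pos by (simp add: field_simps power2_eq_square)
    ultimately show ?thesis by simp
  qed
  have A: "((F \<circ> real_of_ereal) \<longlongrightarrow> - (t\<^sup>2 / (1 + t\<^sup>2))) (at_right 0)"
  proof -
    have "(F \<longlongrightarrow> F 0) (at_right 0)" unfolding F_def
      by (intro tendsto_intros continuous_intros)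
    moreover have "F 0 = - (t\<^sup>2 / (1 + t\<^sup>2))" unfolding F_def c_def using pos by (simp add: field_simps)
    ultimately show ?thesis by (simp add: zero_ereal_def ereal_tendsto_simps)
  qed
  have B: "((F \<circ> real_of_ereal) \<longlongrightarrow> 0) (at_left \<infinity>)"
  proof -
    have "(F \<longlongrightarrow> 0) at_top"
    proof (rule Lim_null_comparison)
      show "\<forall>\<^sub>F x in at_top. norm (F x) \<le> exp (- x) * (1 + (\<bar>t\<bar> + 1) / (1 + t\<^sup>2))"
      proof (intro always_eventually allI)
        fix x :: real
        have "\<bar>t * sin (t * x) - cos (t * x)\<bar> \<le> \<bar>t\<bar> + 1"
        proof -
          have "\<bar>t * sin (t * x) - cos (t * x)\<bar> \<le> \<bar>t * sin (t * x)\<bar> + \<bar>cos (t * x)\<bar>"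
            by (rule abs_triangle_ineq4)
          moreover have "\<bar>t * sin (t * x)\<bar> \<le> \<bar>t\<bar>"
            by (simp add: abs_mult mult_left_le abs_sin_le_one)
          ultimately show ?thesis using abs_cos_le_one[of "t*x"] by linarith
        qed
        hence 1: "\<bar>c * (t * sin (t * x) - cos (t * x))\<bar> \<le> (\<bar>t\<bar> + 1) / (1 + t\<^sup>2)"
        proof -
          have "\<bar>c * (t * sin (t * x) - cos (t * x))\<bar> = \<bar>t * sin (t * x) - cos (t * x)\<bar> / (1 + t\<^sup>2)"
            using pos unfolding c_def by (simp add: abs_mult)
          thus ?thesis using \<open>\<bar>t * sin (t * x) - cos (t * x)\<bar> \<le> \<bar>t\<bar> + 1\<close> pos
            by (simp add: divide_right_mono)
        qed
        have "F x = - (exp (- x) * (1 + c * (t * sin (t * x) - cos (t * x))))"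
          unfolding F_def by (simp add: algebra_simps)
        hence "\<bar>F x\<bar> \<le> exp (- x) * (1 + \<bar>c * (t * sin (t * x) - cos (t * x))\<bar>)"
          using abs_triangle_ineq[of 1 "c * (t * sin (t * x) - cos (t * x))"]
          by (simp add: abs_mult mult_left_mono)
        also have "\<dots> \<le> exp (- x) * (1 + (\<bar>t\<bar> + 1) / (1 + t\<^sup>2))"
          using 1 by (intro mult_left_mono) auto
        finally show "norm (F x) \<le> exp (- x) * (1 + (\<bar>t\<bar> + 1) / (1 + t\<^sup>2))" by simp
      qed
      show "((\<lambda>x. exp (- x) * (1 + (\<bar>t\<bar> + 1) / (1 + t\<^sup>2))) \<longlongrightarrow> 0) at_top"
        by (rule tendsto_mult_left_zero[OF exp_minus_at_top])
    qed
    thus ?thesis by (simp add: ereal_tendsto_simps)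
  qed
  have f_nn: "0 \<le> f x" for x unfolding f_def by (intro mult_nonneg_nonneg) auto
  have ftc: "set_integrable lborel (einterval 0 \<infinity>) f" "(LBINT x=0..\<infinity>. f x) = 0 - - (t\<^sup>2 / (1 + t\<^sup>2))"
    by (rule interval_integral_FTC_nonneg[OF _ deriv _ _ A B]; (simp add: f_nn)?; simp add: f_def)+
  have eint: "einterval 0 \<infinity> = {0::real<..}" by (auto simp: einterval_iff)
  have si: "set_integrable lborel {0<..} f" using ftc(1) eint by simp
  have "(\<integral>\<^sup>+x. ennreal (indicator {0<..} x * f x) \<partial>lborel) = ennreal (LBINT x:{0<..}. f x)"
    using si unfolding set_integrable_def set_lebesgue_integral_def
    by (subst nn_integral_eq_integral[symmetric]) (auto simp: f_nn)
  also have "(LBINT x:{0<..}. f x) = t\<^sup>2 / (1 + t\<^sup>2)"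
    using ftc(2) by (simp add: interval_lebesgue_integral_0_infty)
  finally show ?thesis by (simp add: f_def)
qed



definition Kinf :: "real \<Rightarrow> ennreal" where
  "Kinf p = (\<integral>\<^sup>+t. ennreal (indicator {0<..} t * ((1 - cos t) * t powr (- p - 1))) \<partial>lborel)"

lemma scale_cos:
  fixes y p :: real
  shows "(\<integral>\<^sup>+t. ennreal (indicator {0<..} t * ((1 - cos (t * y)) * t powr (- p - 1))) \<partial>lborel)
       = ennreal (\<bar>y\<bar> powr p) * Kinf p"
proof (cases "y = 0")
  case True thus ?thesis by simp
next
  case False
  define c where "c = 1 / \<bar>y\<bar>"
  have c: "c > 0" using False by (simp add: c_def)
  let ?f = "\<lambda>t. ennreal (indicator {0<..} t * ((1 - cos (t * y)) * t powr (- p - 1)))"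
  have cy: "cos (x * c * y) = cos x" for x
  proof (cases "y > 0")
    case True thus ?thesis by (simp add: c_def)
  next
    case False
    with \<open>y \<noteq> 0\<close> have "x * c * y = - x" by (simp add: c_def)
    thus ?thesis by simp
  qed
  have "(\<integral>\<^sup>+t. ?f t \<partial>lborel) = ennreal \<bar>c\<bar> * (\<integral>\<^sup>+x. ?f (0 + c * x) \<partial>lborel)"
    using c by (intro nn_integral_real_affine) auto
  also have "(\<integral>\<^sup>+x. ?f (0 + c * x) \<partial>lborel)
       = (\<integral>\<^sup>+x. ennreal (c powr (- p - 1)) * ennreal (indicator {0<..} x * ((1 - cos x) * x powr (- p - 1))) \<partial>lborel)"
  proof (intro nn_integral_cong)
    fix x :: real
    show "?f (0 + c * x) = ennreal (c powr (- p - 1)) * ennreal (indicator {0<..} x * ((1 - cos x) * x powr (- p - 1)))"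
    proof (cases "x > 0")
      case True
      have "?f (0 + c * x) = ennreal (c powr (- p - 1) * (indicator {0<..} x * ((1 - cos x) * x powr (- p - 1))))"
        using True c cy[of x] by (simp add: indicator_def powr_mult mult.commute mult.left_commute)
      also have "\<dots> = ennreal (c powr (- p - 1)) * ennreal (indicator {0<..} x * ((1 - cos x) * x powr (- p - 1)))"
        using True by (intro ennreal_mult) auto
      finally show ?thesis .
    next
      case False thus ?thesis using c by (simp add: indicator_def zero_less_mult_iff)
    qed
  qed
  also have "\<dots> = ennreal (c powr (- p - 1)) * Kinf p"
    unfolding Kinf_def by (subst nn_integral_cmult) auto
  also have "ennreal \<bar>c\<bar> * (ennreal (c powr (- p - 1)) * Kinf p) = ennreal (\<bar>y\<bar> powr p) * Kinf p"
  proof -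
    have "\<bar>c\<bar> * c powr (- p - 1) = \<bar>y\<bar> powr p"
      using c False by (simp add: c_def powr_diff powr_minus powr_divide field_simps)
    thus ?thesis using c by (simp add: ennreal_mult'[symmetric] mult.assoc[symmetric])
  qed
  finally show ?thesis .
qed

lemma Kinf_Gamma:
  assumes "0 < p" "p < 2"
  shows "Kinf p * ennreal (Gamma (p + 1)) = ennreal (Gamma (p/2) * Gamma (1 - p/2) / 2)"
proof -
  let ?g = "\<lambda>x t. ennreal (indicator {0<..} x * indicator {0<..} t * ((1 - cos (t * x)) * t powr (- p - 1) * exp (- x)))"
  have "(\<integral>\<^sup>+x. \<integral>\<^sup>+t. ?g x t \<partial>lborel \<partial>lborel)
      = (\<integral>\<^sup>+x. ennreal (indicator {0<..} x * x powr ((p + 1) - 1) * exp (- x)) * Kinf p \<partial>lborel)"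
  proof (intro nn_integral_cong)
    fix x :: real
    have "(\<integral>\<^sup>+t. ?g x t \<partial>lborel) = (\<integral>\<^sup>+t. ennreal (indicator {0<..} x * exp (- x)) * ennreal (indicator {0<..} t * ((1 - cos (t * x)) * t powr (- p - 1))) \<partial>lborel)"
      by (intro nn_integral_cong) (auto simp: indicator_def ennreal_mult'[symmetric] mult_ac)
    also have "\<dots> = ennreal (indicator {0<..} x * exp (- x)) * (ennreal (\<bar>x\<bar> powr p) * Kinf p)"
      by (subst nn_integral_cmult) (auto simp: scale_cos)
    also have "\<dots> = ennreal (indicator {0<..} x * x powr ((p + 1) - 1) * exp (- x)) * Kinf p"
      by (auto simp: indicator_def ennreal_mult'[symmetric] mult_ac)
    finally show "(\<integral>\<^sup>+t. ?g x t \<partial>lborel) = ennreal (indicator {0<..} x * x powr ((p + 1) - 1) * exp (- x)) * Kinf p" .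
  qed
  also have "\<dots> = ennreal (Gamma (p + 1)) * Kinf p"
    using assms Gamma_nn_open[of "p + 1"] by (subst nn_integral_multc) auto
  finally have Q1: "(\<integral>\<^sup>+x. \<integral>\<^sup>+t. ?g x t \<partial>lborel \<partial>lborel) = ennreal (Gamma (p + 1)) * Kinf p" .
  have "(\<integral>\<^sup>+x. \<integral>\<^sup>+t. ?g x t \<partial>lborel \<partial>lborel) = (\<integral>\<^sup>+t. \<integral>\<^sup>+x. ?g x t \<partial>lborel \<partial>lborel)"
    by (rule lborel_pair.Fubini'[symmetric]) simp
  also have "\<dots> = (\<integral>\<^sup>+t. ennreal (indicator {0<..} t * (t powr (1 - p) / (1 + t\<^sup>2))) \<partial>lborel)"
  proof (intro nn_integral_cong)
    fix t :: real
    have "(\<integral>\<^sup>+x. ?g x t \<partial>lborel) = (\<integral>\<^sup>+x. ennreal (indicator {0<..} t * t powr (- p - 1)) * ennreal (indicator {0<..} x * ((1 - cos (t * x)) * exp (- x))) \<partial>lborel)"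
      by (intro nn_integral_cong) (auto simp: indicator_def ennreal_mult'[symmetric] mult_ac)
    also have "\<dots> = ennreal (indicator {0<..} t * t powr (- p - 1)) * ennreal (t\<^sup>2 / (1 + t\<^sup>2))"
      by (subst nn_integral_cmult) (auto simp: cos_laplace_nn)
    also have "\<dots> = ennreal (indicator {0<..} t * (t powr (1 - p) / (1 + t\<^sup>2)))"
    proof (cases "t > 0")
      case True
      have "t powr (- p - 1) * (t\<^sup>2 / (1 + t\<^sup>2)) = t powr (1 - p) / (1 + t\<^sup>2)"
        using True by (simp add: powr_diff powr_minus power2_eq_square field_simps)
      thus ?thesis using True by (simp add: ennreal_mult'[symmetric] indicator_def)
    qed (simp add: indicator_def)
    finally show "(\<integral>\<^sup>+x. ?g x t \<partial>lborel) = ennreal (indicator {0<..} t * (t powr (1 - p) / (1 + t\<^sup>2)))" .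
  qed
  also have "\<dots> = ennreal (Gamma (p/2) * Gamma (1 - p/2) / 2)" using W_value[OF assms] .
  finally show ?thesis using Q1 by (simp add: mult.commute)
qed



lemma Gamma_reflection_real:
  fixes x :: real
  assumes "0 < x" "x < 1"
  shows "Gamma x * Gamma (1 - x) = pi / sin (pi * x)"
proof -
  have "Gamma (complex_of_real x) * Gamma (1 - complex_of_real x) = of_real pi / sin (of_real pi * of_real x)"
    by (rule Gamma_reflection_complex)
  also have "Gamma (1 - complex_of_real x) = of_real (Gamma (1 - x))"
    by (metis Gamma_complex_of_real of_real_1 of_real_diff)
  also have "sin (complex_of_real pi * complex_of_real x) = of_real (sin (pi * x))"
    by (metis of_real_mult sin_of_real)
  finally have "complex_of_real (Gamma x * Gamma (1 - x)) = complex_of_real (pi / sin (pi * x))"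
    by (simp add: Gamma_complex_of_real)
  thus ?thesis using of_real_eq_iff by blast
qed

definition K0 :: "real \<Rightarrow> real" where
  "K0 p = Gamma (p/2) * Gamma (1 - p/2) / (2 * Gamma (p + 1))"

lemma K0_pos: "0 < p \<Longrightarrow> p < 2 \<Longrightarrow> 0 < K0 p"
  unfolding K0_def by (intro divide_pos_pos mult_pos_pos) auto

lemma Kinf_K0:
  assumes "0 < p" "p < 2"
  shows "Kinf p = ennreal (K0 p)"
proof -
  have G: "Gamma (p + 1) > 0" using assms by auto
  have "Kinf p = Kinf p * ennreal (Gamma (p + 1)) * ennreal (1 / Gamma (p + 1))"
    using G by (simp add: mult.assoc ennreal_mult'[symmetric])
  also have "\<dots> = ennreal (Gamma (p/2) * Gamma (1 - p/2) / 2) * ennreal (1 / Gamma (p + 1))"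
    using Kinf_Gamma[OF assms] by simp
  also have "\<dots> = ennreal (K0 p)"
    using assms G by (simp add: K0_def ennreal_mult'[symmetric])
  finally show ?thesis .
qed

lemma K0_C:
  assumes "0 < lam" "lam < 1"
  shows "1 / ((1 + lam) * K0 (1 + lam)) = lam / (sin (lam * pi / 2) * Gamma (1 - lam))"
proof -
  define p where "p = 1 + lam"
  have r1: "Gamma (p/2) * Gamma (1 - p/2) = pi / sin (pi * (p/2))"
    using assms unfolding p_def by (intro Gamma_reflection_real) auto
  have r2: "Gamma lam * Gamma (1 - lam) = pi / sin (pi * lam)"
    using assms by (intro Gamma_reflection_real) auto
  have s1: "sin (pi * (p/2)) = cos (lam * pi / 2)"
  proof -
    have e: "pi * (p/2) = pi/2 + lam * pi / 2" unfolding p_def by (simp add: field_simps)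
    show ?thesis by (subst e) (simp add: sin_add)
  qed
  have s2: "sin (pi * lam) = 2 * sin (lam * pi / 2) * cos (lam * pi / 2)"
    using sin_double[of "lam * pi / 2"] by (simp add: mult.commute)
  have g1: "Gamma (p + 1) = p * lam * Gamma lam"
  proof -
    have n1: "lam \<notin> \<int>\<^sub>\<le>\<^sub>0" "1 + lam \<notin> \<int>\<^sub>\<le>\<^sub>0" using assms by (auto dest: nonpos_Ints_nonpos)
    have "Gamma (p + 1) = p * Gamma p" unfolding p_def using Gamma_plus1[OF n1(2)] by simp
    also have "Gamma p = lam * Gamma lam" unfolding p_def using Gamma_plus1[OF n1(1)] by (simp add: add.commute)
    finally show ?thesis by simp
  qed
  have cpos: "cos (lam * pi / 2) > 0" using assms by (intro cos_gt_zero) (auto simp: field_simps)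
  have spos: "sin (lam * pi / 2) > 0" using assms by (intro sin_gt_zero) (auto simp: field_simps)
  have gpos: "Gamma lam > 0" "Gamma (1 - lam) > 0" using assms by auto
  have "K0 p = pi / (2 * cos (lam * pi / 2) * p * lam * Gamma lam)"
    unfolding K0_def r1 s1 g1 by (simp add: field_simps)
  also have "Gamma lam = pi / (2 * sin (lam * pi / 2) * cos (lam * pi / 2) * Gamma (1 - lam))"
    using r2 s2 gpos cpos spos by (simp add: field_simps)
  finally have "K0 p = sin (lam * pi / 2) * Gamma (1 - lam) / (p * lam)"
    using cpos spos gpos assms by (simp add: field_simps)
  moreover have "p > 0" unfolding p_def using assms by simp
  moreover have "sin (lam * pi / 2) * Gamma (1 - lam) > 0" using spos gpos by simp
  ultimately have "p * K0 p = sin (lam * pi / 2) * Gamma (1 - lam) / lam"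
    using assms by (simp add: field_simps)
  hence "1 / (p * K0 p) = lam / (sin (lam * pi / 2) * Gamma (1 - lam))"
    by simp
  thus ?thesis unfolding p_def .
qed



lemma powr_at_right_0:
  assumes "e > 0"
  shows "((\<lambda>t::real. t powr e) \<longlongrightarrow> 0) (at_right 0)"
proof -
  have "((\<lambda>t::real. (inverse t) powr (- e)) \<longlongrightarrow> 0) (at_right 0)"
    using assms by (intro tendsto_neg_powr filterlim_inverse_at_top_right) auto
  moreover have "\<forall>\<^sub>F t in at_right 0. (inverse t) powr (- e) = t powr e"
  proof (rule eventually_mono[OF eventually_at_right_less])
    fix t :: real assume "0 < t"
    have "(inverse t) powr (- e) = inverse ((inverse t) powr e)" by (rule powr_minus)
    also have "(inverse t) powr e = inverse (t powr e)" using \<open>0 < t\<close> by (simp add: inverse_eq_divide powr_divide)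
    finally show "(inverse t) powr (- e) = t powr e" by simp
  qed
  ultimately show ?thesis by (rule Lim_transform_eventually)
qed

lemma sq_id: "((x::real) * v + y * u)\<^sup>2 + (x * u - y * v)\<^sup>2 = (x\<^sup>2 + y\<^sup>2) * (u\<^sup>2 + v\<^sup>2)"
  by (simp add: power2_eq_square algebra_simps)

lemma one_minus_cos_le: "1 - cos (x::real) \<le> x\<^sup>2 / 2"
proof -
  have "1 - cos x = 2 * (sin (x/2))\<^sup>2"
    using cos_double_sin[of "x/2"] by simp
  also have "(sin (x/2))\<^sup>2 \<le> (x/2)\<^sup>2"
    using abs_sin_x_le_abs_x[of "x/2"] by (metis abs_ge_zero power2_abs power_mono)
  finally show ?thesis by (simp add: power_divide)
qed

locale GS =
  fixes al th s mu lam :: real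
  assumes al1: "1 < al" and al2: "al < 2" and s0: "0 < s" and lam0: "0 < lam" and lam1: "lam < al - 1"
begin

definition "a t = s * t powr al"
definition "A t = 1 + a t"
definition "B t = th * a t"
definition "D t = (A t)\<^sup>2 + (B t)\<^sup>2"
definition "N t = A t * cos (mu * t) + B t * sin (mu * t)"
definition "g t = 1 - N t / D t"
definition "p = 1 + lam"

lemma a_nn: "0 \<le> a t" unfolding a_def using s0 by simp
lemma A_ge1: "1 \<le> A t" unfolding A_def using a_nn by simp
lemma D_ge: "1 \<le> D t" "(A t)\<^sup>2 \<le> D t" "(B t)\<^sup>2 \<le> D t"
proof -
  have "1 \<le> (A t)\<^sup>2" using A_ge1[of t] by (simp add: one_le_power)
  moreover have "0 \<le> (B t)\<^sup>2" "0 \<le> (A t)\<^sup>2" by simp_all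
  ultimately show "1 \<le> D t" "(A t)\<^sup>2 \<le> D t" "(B t)\<^sup>2 \<le> D t" unfolding D_def by linarith+
qed
lemma D_pos: "0 < D t" using D_ge(1)[of t] by simp
lemma A_le_D: "A t \<le> D t"
proof -
  have "A t \<le> (A t)\<^sup>2" using A_ge1[of t] by (simp add: power2_eq_square)
  thus ?thesis using D_ge(2)[of t] by simp
qed
lemma absB_le_D: "\<bar>B t\<bar> \<le> D t"
proof (cases "\<bar>B t\<bar> \<le> 1")
  case True thus ?thesis using D_ge(1)[of t] by simp
next
  case False
  have sq: "(B t)\<^sup>2 = \<bar>B t\<bar> * \<bar>B t\<bar>" by (metis abs_mult_self_eq power2_eq_square)
  have "\<bar>B t\<bar> * 1 \<le> \<bar>B t\<bar> * \<bar>B t\<bar>" using False by (intro mult_left_mono) auto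
  hence "\<bar>B t\<bar> \<le> (B t)\<^sup>2" using sq by simp
  thus ?thesis using D_ge(3)[of t] by simp
qed
lemma AB_le_D: "A t * \<bar>B t\<bar> \<le> D t"
proof -
  have "2 * (A t * \<bar>B t\<bar>) \<le> (A t)\<^sup>2 + (B t)\<^sup>2"
    using sum_squares_bound[of "A t" "\<bar>B t\<bar>"] by (simp add: power2_abs)
  moreover have "0 \<le> A t * \<bar>B t\<bar>" using A_ge1[of t] by simp
  ultimately show ?thesis unfolding D_def by linarith
qed
lemma absN_le_D: "\<bar>N t\<bar> \<le> D t"
proof -
  have "(N t)\<^sup>2 \<le> D t"
  proof -
    have "(N t)\<^sup>2 + (A t * sin (mu * t) - B t * cos (mu * t))\<^sup>2 = ((A t)\<^sup>2 + (B t)\<^sup>2) * ((sin (mu * t))\<^sup>2 + (cos (mu * t))\<^sup>2)"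
      unfolding N_def by (rule sq_id)
    hence "(N t)\<^sup>2 + (A t * sin (mu * t) - B t * cos (mu * t))\<^sup>2 = D t"
      unfolding D_def by simp
    thus ?thesis by (metis le_add_same_cancel1 zero_le_power2)
  qed
  also have "D t \<le> (D t)\<^sup>2" using D_ge(1)[of t] by (simp add: power2_eq_square)
  finally show ?thesis by (metis abs_le_square_iff abs_of_pos D_pos)
qed

lemma g_nn: "0 \<le> g t"
  unfolding g_def using absN_le_D[of t] D_pos[of t] by (simp add: divide_le_eq_1 abs_le_iff)
lemma g_le2: "g t \<le> 2"
proof -
  have "- 1 \<le> N t / D t" using absN_le_D[of t] D_pos[of t] by (simp add: le_divide_eq abs_le_iff)
  thus ?thesis unfolding g_def by simp
qed

lemma g_small: "g t \<le> (1 + 2 * \<bar>th\<bar>) * a t + mu\<^sup>2 * t\<^sup>2 / 2"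
proof -
  have Dp: "0 < D t" by (rule D_pos)
  have eq: "g t = (A t * a t + A t * (1 - cos (mu * t)) + (B t)\<^sup>2 - B t * sin (mu * t)) / D t"
    unfolding g_def N_def using Dp by (simp add: field_simps D_def A_def power2_eq_square)
  have 1: "A t * a t \<le> D t * a t" using A_le_D[of t] a_nn[of t] by (simp add: mult_right_mono)
  have 2: "A t * (1 - cos (mu * t)) \<le> D t * (1 - cos (mu * t))" using A_le_D[of t] by (simp add: mult_right_mono)
  have 3: "(B t)\<^sup>2 \<le> D t * \<bar>B t\<bar>"
  proof -
    have "(B t)\<^sup>2 = \<bar>B t\<bar> * \<bar>B t\<bar>" by (metis abs_mult_self_eq power2_eq_square)
    also have "\<dots> \<le> D t * \<bar>B t\<bar>" using absB_le_D[of t] by (intro mult_right_mono) auto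
    finally show ?thesis .
  qed
  have 4: "- (B t * sin (mu * t)) \<le> D t * \<bar>B t\<bar>"
  proof -
    have "- (B t * sin (mu * t)) \<le> \<bar>B t\<bar>" using abs_sin_le_one[of "mu*t"]
      by (metis abs_ge_minus_self abs_mult abs_of_nonneg le_less_linear mult.commute mult_left_le abs_ge_zero order.trans)
    also have "\<dots> \<le> D t * \<bar>B t\<bar>" using D_ge(1)[of t] by (simp add: mult_le_cancel_right1)
    finally show ?thesis .
  qed
  have "g t \<le> (D t * a t + D t * (1 - cos (mu * t)) + D t * \<bar>B t\<bar> + D t * \<bar>B t\<bar>) / D t"
    unfolding eq using 1 2 3 4 Dp by (intro divide_right_mono) auto
  also have "\<dots> = a t + (1 - cos (mu * t)) + 2 * \<bar>B t\<bar>" using Dp by (simp add: field_simps)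
  also have "\<bar>B t\<bar> = \<bar>th\<bar> * a t" unfolding B_def using a_nn[of t] by (simp add: abs_mult)
  finally show ?thesis using one_minus_cos_le[of "mu * t"] by (simp add: power_mult_distrib algebra_simps)
qed

end


context GS begin

definition "a' t = s * (al * t powr (al - 1))"
definition "gd t = mu * (A t * sin (mu * t) - B t * cos (mu * t)) / D t
   - a' t * (cos (mu * t) + th * sin (mu * t)) / D t
   + 2 * a' t * N t * (A t + th * B t) / (D t)\<^sup>2"

lemma a_deriv: "0 < t \<Longrightarrow> DERIV a t :> a' t"
  unfolding a_def a'_def by (auto intro!: derivative_eq_intros)

lemma N_deriv:
  assumes "0 < t"
  shows "DERIV N t :> a' t * cos (mu * t) - A t * (mu * sin (mu * t)) + th * a' t * sin (mu * t) + B t * (mu * cos (mu * t))"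
proof -
  have dA: "DERIV A t :> a' t" unfolding A_def using a_deriv[OF assms] by (auto intro!: derivative_eq_intros)
  have dB: "DERIV B t :> th * a' t" unfolding B_def using a_deriv[OF assms] by (auto intro!: derivative_eq_intros)
  show ?thesis unfolding N_def
    by (rule derivative_eq_intros dA dB refl | simp add: algebra_simps)+
qed

lemma D_deriv:
  assumes "0 < t"
  shows "DERIV D t :> 2 * a' t * (A t + th * B t)"
proof -
  have dA: "DERIV A t :> a' t" unfolding A_def using a_deriv[OF assms] by (auto intro!: derivative_eq_intros)
  have dB: "DERIV B t :> th * a' t" unfolding B_def using a_deriv[OF assms] by (auto intro!: derivative_eq_intros)
  show ?thesis unfolding D_def
    by (rule derivative_eq_intros dA dB refl | simp add: algebra_simps)+
qed

lemma g_deriv: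
  assumes "0 < t"
  shows "DERIV g t :> gd t"
proof -
  have "DERIV g t :> - (((a' t * cos (mu * t) - A t * (mu * sin (mu * t)) + th * a' t * sin (mu * t) + B t * (mu * cos (mu * t))) * D t - N t * (2 * a' t * (A t + th * B t))) / (D t * D t))"
    unfolding g_def
    by (rule derivative_eq_intros N_deriv[OF assms] D_deriv[OF assms] refl | simp add: D_pos[of t, THEN less_imp_neq, symmetric])+
  moreover have "- (((a' t * cos (mu * t) - A t * (mu * sin (mu * t)) + th * a' t * sin (mu * t) + B t * (mu * cos (mu * t))) * D t - N t * (2 * a' t * (A t + th * B t))) / (D t * D t)) = gd t"
    unfolding gd_def using D_pos[of t] by (simp add: field_simps power2_eq_square)
  ultimately show ?thesis by simp
qed

end


context GS begin

definition "e0 = al - lam - 2"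
definition "dm t = domf e0 (- p) t"

definition "T1 t = t powr (-(1 + lam)) * ((A t * sin (mu * t) - B t * cos (mu * t)) / D t)"
definition "T2 t = t powr (al - lam - 2) * ((cos (mu * t) + th * sin (mu * t)) / D t)"
definition "T3 t = t powr (al - lam - 2) * (N t * (A t + th * B t) / (D t)\<^sup>2)"
definition "G t = g t * t powr (- p - 1)"

lemma e0_bounds: "-1 < e0" "e0 < 0" unfolding e0_def using lam0 lam1 al2 by auto
lemma p_bounds: "1 < p" "p < 2" unfolding p_def using lam0 lam1 al2 by auto

lemma dm_int: "set_integrable lborel {0<..} dm"
  unfolding dm_def[abs_def] using e0_bounds p_bounds by (intro domf_integrable) auto

lemma dm_small: "0 < t \<Longrightarrow> t \<le> 1 \<Longrightarrow> e0 \<le> e \<Longrightarrow> t powr e \<le> dm t"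
  unfolding dm_def domf_def by (auto intro: powr_mono')
lemma dm_large: "1 \<le> t \<Longrightarrow> e \<le> - p \<Longrightarrow> t powr e \<le> dm t"
  unfolding dm_def domf_def by (cases "t = 1") (auto intro: powr_mono)
lemma dm_nn: "0 \<le> dm t" unfolding dm_def by (rule domf_nonneg)

lemma a_le_D: "a t \<le> D t" using A_le_D[of t] unfolding A_def by simp

lemma invD_bound:
  assumes "0 < t"
  shows "t powr e0 / D t \<le> (1 + 1/s) * dm t"
proof (cases "t \<le> 1")
  case True
  have "t powr e0 / D t \<le> t powr e0"
    using D_ge(1)[of t] by (simp add: divide_le_eq mult_le_cancel_left1)
  also have "\<dots> \<le> dm t" using dm_small[OF assms True] by simp
  also have "\<dots> \<le> (1 + 1/s) * dm t" using s0 dm_nn[of t] by (simp add: mult_le_cancel_right1)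
  finally show ?thesis .
next
  case False
  have "a t > 0" unfolding a_def using s0 assms by simp
  have "t powr e0 / D t \<le> t powr e0 / a t"
    using a_le_D[of t] \<open>a t > 0\<close> by (intro divide_left_mono) auto
  also have "\<dots> = (1/s) * t powr (- p - 1)"
    unfolding a_def e0_def p_def using assms s0 by (simp add: powr_diff powr_minus field_simps powr_add)
  also have "\<dots> \<le> (1/s) * dm t"
    using dm_large[of t "- p - 1"] False s0 by (intro mult_left_mono) auto
  also have "\<dots> \<le> (1 + 1/s) * dm t" using s0 dm_nn[of t] by (intro mult_right_mono) auto
  finally show ?thesis .
qed

end


context GS begin

lemma meas_all:
  "set_borel_measurable lborel {0<..} G" "set_borel_measurable lborel {0<..} T1"
  "set_borel_measurable lborel {0<..} T2" "set_borel_measurable lborel {0<..} T3"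
proof -
  have ca: "continuous_on {0<..} a" unfolding a_def by (intro continuous_intros) auto
  have cA: "continuous_on {0<..} A" unfolding A_def by (intro continuous_intros ca)
  have cB: "continuous_on {0<..} B" unfolding B_def by (intro continuous_intros ca)
  have cD: "continuous_on {0<..} D" unfolding D_def by (intro continuous_intros cA cB)
  have cN: "continuous_on {0<..} N" unfolding N_def by (intro continuous_intros cA cB)
  have Dn: "\<forall>x\<in>{0<..}. D x \<noteq> 0"
  proof
    fix x :: real show "D x \<noteq> 0" using D_pos[of x] by simp
  qed
  have Dn2: "\<forall>x\<in>{0<..}. (D x)\<^sup>2 \<noteq> 0"
  proof
    fix x :: real show "(D x)\<^sup>2 \<noteq> 0" using D_pos[of x] by simp
  qed
  have c: "continuous_on {0<..} G" "continuous_on {0<..} T1" "continuous_on {0<..} T2" "continuous_on {0<..} T3"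
    unfolding G_def g_def T1_def T2_def T3_def
    by (intro continuous_intros cA cB cD cN Dn Dn2; auto)+
  have m: "\<And>f. continuous_on {0<..} f \<Longrightarrow> set_borel_measurable lborel {0<..} (f::real\<Rightarrow>real)"
  proof -
    fix f :: "real \<Rightarrow> real" assume "continuous_on {0<..} f"
    hence "(\<lambda>x. indicator {0<..} x *\<^sub>R f x) \<in> borel_measurable borel"
      by (intro borel_measurable_continuous_on_indicator) auto
    thus "set_borel_measurable lborel {0<..} f"
      unfolding set_borel_measurable_def by (simp add: measurable_cong_sets[OF sets_lborel refl])
  qed
  show "set_borel_measurable lborel {0<..} G" "set_borel_measurable lborel {0<..} T1"
    "set_borel_measurable lborel {0<..} T2" "set_borel_measurable lborel {0<..} T3"
    using c by (auto intro: m)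
qed

lemma absN_le: "\<bar>N t\<bar> \<le> A t + \<bar>B t\<bar>"
proof -
  have "\<bar>N t\<bar> \<le> \<bar>A t * cos (mu * t)\<bar> + \<bar>B t * sin (mu * t)\<bar>" unfolding N_def by (rule abs_triangle_ineq)
  also have "\<bar>A t * cos (mu * t)\<bar> \<le> A t" using A_ge1[of t] abs_cos_le_one[of "mu*t"]
    by (simp add: abs_mult mult_left_le)
  also have "\<bar>B t * sin (mu * t)\<bar> \<le> \<bar>B t\<bar>" using abs_sin_le_one[of "mu*t"] by (simp add: abs_mult mult_left_le)
  finally show ?thesis by simp
qed

lemma prod_le: "(A t + \<bar>B t\<bar>) * (A t + \<bar>th\<bar> * \<bar>B t\<bar>) \<le> 2 * (1 + \<bar>th\<bar>) * D t"
proof -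
  have e: "(A t + \<bar>B t\<bar>) * (A t + \<bar>th\<bar> * \<bar>B t\<bar>) = (A t)\<^sup>2 + \<bar>th\<bar> * (A t * \<bar>B t\<bar>) + A t * \<bar>B t\<bar> + \<bar>th\<bar> * (\<bar>B t\<bar> * \<bar>B t\<bar>)"
    by (simp add: algebra_simps power2_eq_square)
  have "\<bar>B t\<bar> * \<bar>B t\<bar> = (B t)\<^sup>2" by (metis abs_mult_self_eq power2_eq_square)
  hence 1: "\<bar>B t\<bar> * \<bar>B t\<bar> \<le> D t" using D_ge(3)[of t] by simp
  have 2: "\<bar>th\<bar> * (A t * \<bar>B t\<bar>) \<le> \<bar>th\<bar> * D t" using AB_le_D[of t] by (intro mult_left_mono) auto
  have 3: "\<bar>th\<bar> * (\<bar>B t\<bar> * \<bar>B t\<bar>) \<le> \<bar>th\<bar> * D t" using 1 by (intro mult_left_mono) auto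
  show ?thesis unfolding e using D_ge(2)[of t] AB_le_D[of t] 2 3 by (simp add: algebra_simps)
qed

lemma G_bound:
  assumes t: "0 < t"
  shows "\<bar>G t\<bar> \<le> ((1 + 2 * \<bar>th\<bar>) * s + mu\<^sup>2 / 2 + 2) * dm t"
proof -
  have Gnn: "0 \<le> G t" unfolding G_def using g_nn[of t] by simp
  have dnn: "0 \<le> dm t" by (rule dm_nn)
  show ?thesis
  proof (cases "t \<le> 1")
    case True
    have "G t \<le> ((1 + 2 * \<bar>th\<bar>) * a t + mu\<^sup>2 * t\<^sup>2 / 2) * t powr (- p - 1)"
      unfolding G_def using g_small[of t] by (intro mult_right_mono) auto
    also have "\<dots> = (1 + 2 * \<bar>th\<bar>) * s * t powr (al - p - 1) + mu\<^sup>2 / 2 * t powr (1 - p)"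
    proof -
      have e1: "al - p - 1 = al + (- p - 1)" by simp
      have "t powr al * t powr (- p - 1) = t powr (al - p - 1)" by (simp only: e1 powr_add)
      moreover have "t\<^sup>2 * t powr (- p - 1) = t powr (1 - p)"
      proof -
        have "t\<^sup>2 = t powr 2" using t by (simp add: powr_numeral)
        moreover have e2: "1 - p = 2 + (- p - 1)" by simp
        ultimately show ?thesis by (simp only: e2 powr_add)
      qed
      ultimately show ?thesis unfolding a_def by (simp add: algebra_simps)
    qed
    also have "\<dots> \<le> (1 + 2 * \<bar>th\<bar>) * s * dm t + mu\<^sup>2 / 2 * dm t"
    proof (intro add_mono mult_left_mono)
      show "t powr (al - p - 1) \<le> dm t" using dm_small[OF t True] e0_bounds unfolding e0_def p_def by simp
      show "t powr (1 - p) \<le> dm t" using dm_small[OF t True] al2 unfolding e0_def p_def by simp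
    qed (use s0 in auto)
    also have "\<dots> \<le> ((1 + 2 * \<bar>th\<bar>) * s + mu\<^sup>2 / 2 + 2) * dm t"
      using dnn by (simp add: algebra_simps)
    finally show ?thesis using Gnn by simp
  next
    case False
    have "G t \<le> 2 * t powr (- p - 1)" unfolding G_def using g_le2[of t] by (intro mult_right_mono) auto
    also have "\<dots> \<le> 2 * dm t" using dm_large[of t "- p - 1"] False by simp
    also have "\<dots> \<le> ((1 + 2 * \<bar>th\<bar>) * s + mu\<^sup>2 / 2 + 2) * dm t"
      using dnn s0 by (intro mult_right_mono) auto
    finally show ?thesis using Gnn by simp
  qed
qed

lemma T1_bound:
  assumes t: "0 < t"
  shows "\<bar>T1 t\<bar> \<le> (\<bar>mu\<bar> + \<bar>th\<bar> * s + 2) * dm t"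
proof -
  have dnn: "0 \<le> dm t" by (rule dm_nn)
  have Dp: "0 < D t" by (rule D_pos)
  have T1e: "\<bar>T1 t\<bar> = t powr (- p) * (\<bar>A t * sin (mu * t) - B t * cos (mu * t)\<bar> / D t)"
    unfolding T1_def p_def using Dp by (simp add: abs_mult)
  have tri: "\<bar>A t * sin (mu * t) - B t * cos (mu * t)\<bar> \<le> A t * \<bar>sin (mu * t)\<bar> + \<bar>B t\<bar>"
  proof -
    have "\<bar>A t * sin (mu * t) - B t * cos (mu * t)\<bar> \<le> \<bar>A t * sin (mu * t)\<bar> + \<bar>B t * cos (mu * t)\<bar>"
      by (rule abs_triangle_ineq4)
    also have "\<bar>B t * cos (mu * t)\<bar> \<le> \<bar>B t\<bar>" using abs_cos_le_one[of "mu*t"] by (simp add: abs_mult mult_left_le)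
    finally show ?thesis using A_ge1[of t] by (simp add: abs_mult)
  qed
  show ?thesis
  proof (cases "t \<le> 1")
    case True
    have "\<bar>A t * sin (mu * t) - B t * cos (mu * t)\<bar> / D t \<le> (A t * \<bar>sin (mu * t)\<bar> + \<bar>B t\<bar>) / D t"
      using tri Dp by (intro divide_right_mono) auto
    also have "\<dots> = (A t / D t) * \<bar>sin (mu * t)\<bar> + \<bar>B t\<bar> / D t" using Dp by (simp add: field_simps)
    also have "\<dots> \<le> 1 * (\<bar>mu\<bar> * t) + \<bar>B t\<bar>"
    proof (intro add_mono mult_mono)
      show "A t / D t \<le> 1" using A_le_D[of t] Dp by simp
      show "\<bar>sin (mu * t)\<bar> \<le> \<bar>mu\<bar> * t" using abs_sin_x_le_abs_x[of "mu * t"] t by (simp add: abs_mult)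
      show "\<bar>B t\<bar> / D t \<le> \<bar>B t\<bar>" using D_ge(1)[of t] by (simp add: divide_le_eq mult_le_cancel_left1)
    qed (use t in auto)
    also have "\<dots> = \<bar>mu\<bar> * t + \<bar>th\<bar> * s * t powr al" unfolding B_def a_def using s0 by (simp add: abs_mult)
    finally have h: "\<bar>A t * sin (mu * t) - B t * cos (mu * t)\<bar> / D t \<le> \<bar>mu\<bar> * t + \<bar>th\<bar> * s * t powr al" .
    have "\<bar>T1 t\<bar> \<le> t powr (- p) * (\<bar>mu\<bar> * t + \<bar>th\<bar> * s * t powr al)"
      unfolding T1e using h by (intro mult_left_mono) auto
    also have "\<dots> = \<bar>mu\<bar> * t powr (1 - p) + \<bar>th\<bar> * s * t powr (al - p)"
      using t by (simp add: algebra_simps powr_add[symmetric] powr_diff powr_minus divide_inverse)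
    also have "\<dots> \<le> \<bar>mu\<bar> * dm t + \<bar>th\<bar> * s * dm t"
    proof (intro add_mono mult_left_mono)
      show "t powr (1 - p) \<le> dm t" using dm_small[OF t True] al2 unfolding e0_def p_def by simp
      show "t powr (al - p) \<le> dm t" using dm_small[OF t True] unfolding e0_def p_def by simp
    qed (use s0 in auto)
    also have "\<dots> \<le> (\<bar>mu\<bar> + \<bar>th\<bar> * s + 2) * dm t" using dnn by (simp add: algebra_simps)
    finally show ?thesis .
  next
    case False
    have "\<bar>A t * sin (mu * t) - B t * cos (mu * t)\<bar> \<le> A t + \<bar>B t\<bar>"
      using tri abs_sin_le_one[of "mu*t"] A_ge1[of t] by (smt (verit) mult_left_le)
    also have "\<dots> \<le> 2 * D t" using A_le_D[of t] absB_le_D[of t] by simp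
    finally have "\<bar>A t * sin (mu * t) - B t * cos (mu * t)\<bar> / D t \<le> 2" using Dp by (simp add: divide_le_eq)
    hence "\<bar>T1 t\<bar> \<le> t powr (- p) * 2" unfolding T1e by (intro mult_left_mono) auto
    also have "\<dots> \<le> dm t * 2" using dm_large[of t "- p"] False by (intro mult_right_mono) auto
    also have "\<dots> \<le> (\<bar>mu\<bar> + \<bar>th\<bar> * s + 2) * dm t" using dnn s0 by (simp add: algebra_simps)
    finally show ?thesis .
  qed
qed

lemma T2_bound:
  assumes t: "0 < t"
  shows "\<bar>T2 t\<bar> \<le> (1 + \<bar>th\<bar>) * (1 + 1/s) * dm t"
proof -
  have Dp: "0 < D t" by (rule D_pos)
  have "\<bar>cos (mu * t) + th * sin (mu * t)\<bar> \<le> 1 + \<bar>th\<bar>"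
  proof -
    have "\<bar>cos (mu * t) + th * sin (mu * t)\<bar> \<le> \<bar>cos (mu * t)\<bar> + \<bar>th * sin (mu * t)\<bar>" by (rule abs_triangle_ineq)
    moreover have "\<bar>th * sin (mu * t)\<bar> \<le> \<bar>th\<bar>" using abs_sin_le_one[of "mu*t"] by (simp add: abs_mult mult_left_le)
    ultimately show ?thesis using abs_cos_le_one[of "mu*t"] by linarith
  qed
  hence h2: "\<bar>cos (mu * t) + th * sin (mu * t)\<bar> / D t \<le> (1 + \<bar>th\<bar>) / D t"
    using Dp by (intro divide_right_mono) auto
  have "\<bar>T2 t\<bar> = t powr e0 * (\<bar>cos (mu * t) + th * sin (mu * t)\<bar> / D t)"
    unfolding T2_def e0_def using Dp by (simp add: abs_mult)
  also have "\<dots> \<le> t powr e0 * ((1 + \<bar>th\<bar>) / D t)" using h2 by (intro mult_left_mono) auto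
  also have "\<dots> = (1 + \<bar>th\<bar>) * (t powr e0 / D t)" by simp
  also have "\<dots> \<le> (1 + \<bar>th\<bar>) * ((1 + 1/s) * dm t)" using invD_bound[OF t] by (intro mult_left_mono) auto
  finally show ?thesis by (simp add: mult.assoc)
qed

lemma T3_bound:
  assumes t: "0 < t"
  shows "\<bar>T3 t\<bar> \<le> 2 * (1 + \<bar>th\<bar>) * (1 + 1/s) * dm t"
proof -
  have Dp: "0 < D t" by (rule D_pos)
  have "\<bar>N t * (A t + th * B t)\<bar> \<le> (A t + \<bar>B t\<bar>) * (A t + \<bar>th\<bar> * \<bar>B t\<bar>)"
  proof -
    have "\<bar>A t + th * B t\<bar> \<le> A t + \<bar>th\<bar> * \<bar>B t\<bar>"
      using abs_triangle_ineq[of "A t" "th * B t"] A_ge1[of t] by (simp add: abs_mult)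
    thus ?thesis unfolding abs_mult using absN_le[of t] by (intro mult_mono) auto
  qed
  also have "\<dots> \<le> 2 * (1 + \<bar>th\<bar>) * D t" by (rule prod_le)
  finally have h: "\<bar>N t * (A t + th * B t)\<bar> \<le> 2 * (1 + \<bar>th\<bar>) * D t" .
  have "\<bar>N t * (A t + th * B t) / (D t)\<^sup>2\<bar> = \<bar>N t * (A t + th * B t)\<bar> / (D t)\<^sup>2"
    by (simp add: abs_divide)
  also have "\<dots> \<le> 2 * (1 + \<bar>th\<bar>) * D t / (D t)\<^sup>2" using h Dp by (intro divide_right_mono) auto
  also have "\<dots> = 2 * (1 + \<bar>th\<bar>) / D t" using Dp by (simp add: power2_eq_square)
  finally have "\<bar>N t * (A t + th * B t) / (D t)\<^sup>2\<bar> \<le> 2 * (1 + \<bar>th\<bar>) / D t" .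
  have "\<bar>T3 t\<bar> = t powr e0 * \<bar>N t * (A t + th * B t) / (D t)\<^sup>2\<bar>"
    unfolding T3_def e0_def by (simp add: abs_mult)
  also have "\<dots> \<le> t powr e0 * (2 * (1 + \<bar>th\<bar>) / D t)"
    by (rule mult_left_mono) (use \<open>\<bar>N t * (A t + th * B t) / (D t)\<^sup>2\<bar> \<le> _\<close> in auto)
  also have "\<dots> = 2 * (1 + \<bar>th\<bar>) * (t powr e0 / D t)" by simp
  also have "\<dots> \<le> 2 * (1 + \<bar>th\<bar>) * ((1 + 1/s) * dm t)" using invD_bound[OF t] by (intro mult_left_mono) auto
  finally show ?thesis by (simp add: mult.assoc)
qed

lemma int_all:
  "set_integrable lborel {0<..} G" "set_integrable lborel {0<..} T1"
  "set_integrable lborel {0<..} T2" "set_integrable lborel {0<..} T3"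
  using e0_bounds p_bounds meas_all G_bound T1_bound T2_bound T3_bound
  unfolding dm_def
  by (auto intro!: set_integrable_by_domf[where a=e0 and b="-p"])

end


context GS begin

definition "Hc t = mu * T1 t - al * s * T2 t + 2 * al * s * T3 t"

lemma Hc_int: "set_integrable lborel {0<..} Hc"
  unfolding Hc_def[abs_def] using int_all by (intro set_integral_add set_integral_diff set_integrable_mult_right) auto

lemma gd_Hc:
  assumes t: "0 < t"
  shows "gd t * t powr (- p) = Hc t"
proof -
  have Dp: "0 < D t" by (rule D_pos)
  have h: "t powr (al - 1) * t powr (- p) = t powr (al - lam - 2)"
  proof -
    have "al - lam - 2 = (al - 1) + (- p)" unfolding p_def by simp
    thus ?thesis by (simp only: powr_add)
  qed
  have "gd t * t powr (- p) = mu * (t powr (- p) * ((A t * sin (mu * t) - B t * cos (mu * t)) / D t))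
      - al * s * ((t powr (al - 1) * t powr (- p)) * ((cos (mu * t) + th * sin (mu * t)) / D t))
      + 2 * al * s * ((t powr (al - 1) * t powr (- p)) * (N t * (A t + th * B t) / (D t)\<^sup>2))"
    unfolding gd_def a'_def using Dp by (simp add: field_simps)
  also have "\<dots> = Hc t" unfolding Hc_def T1_def T2_def T3_def h by (simp add: p_def)
  finally show ?thesis .
qed

definition "F t = g t * t powr (- p)"

lemma F_deriv: "0 < t \<Longrightarrow> DERIV F t :> gd t * t powr (- p) - p * G t"
proof -
  assume t: "0 < t"
  have "DERIV F t :> gd t * t powr (- p) + g t * (- p * t powr (- p - 1))"
    unfolding F_def by (rule derivative_eq_intros g_deriv[OF t] has_real_derivative_powr[OF t] refl | simp)+
  thus ?thesis unfolding G_def by (simp add: algebra_simps)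
qed

lemma isCont_basic:
  assumes t: "0 < t"
  shows "isCont a t" "isCont A t" "isCont B t" "isCont D t" "isCont N t" "isCont a' t" "isCont g t" "isCont gd t"
proof -
  show ca: "isCont a t" unfolding a_def using t by (intro continuous_intros) auto
  show cA: "isCont A t" unfolding A_def by (intro continuous_intros ca)
  show cB: "isCont B t" unfolding B_def by (intro continuous_intros ca)
  show cD: "isCont D t" unfolding D_def by (intro continuous_intros cA cB)
  show cN: "isCont N t" unfolding N_def by (intro continuous_intros cA cB)
  show ca': "isCont a' t" unfolding a'_def using t by (intro continuous_intros) auto
  have Dn: "D t \<noteq> 0" "(D t)\<^sup>2 \<noteq> 0" using D_pos[of t] by auto
  show "isCont g t" unfolding g_def by (intro continuous_intros cN cD Dn)
  show "isCont gd t" unfolding gd_def by (intro continuous_intros cN cD Dn cA cB ca')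
qed

lemma F_lim0: "((F \<circ> real_of_ereal) \<longlongrightarrow> 0) (at_right 0)"
proof -
  let ?u = "\<lambda>t. (1 + 2 * \<bar>th\<bar>) * s * t powr (al - p) + mu\<^sup>2 / 2 * t powr (2 - p)"
  have u: "(?u \<longlongrightarrow> 0) (at_right 0)"
  proof -
    have "(?u \<longlongrightarrow> (1 + 2 * \<bar>th\<bar>) * s * 0 + mu\<^sup>2 / 2 * 0) (at_right 0)"
      using p_bounds lam1 unfolding p_def
      by (intro tendsto_intros powr_at_right_0) auto
    thus ?thesis by simp
  qed
  have ev: "\<forall>\<^sub>F t in at_right 0. 0 \<le> F t \<and> F t \<le> ?u t"
  proof (rule eventually_mono[OF eventually_at_right_less])
    fix t :: real assume t: "0 < t"
    have "F t \<le> ((1 + 2 * \<bar>th\<bar>) * a t + mu\<^sup>2 * t\<^sup>2 / 2) * t powr (- p)"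
      unfolding F_def using g_small[of t] by (intro mult_right_mono) auto
    also have "\<dots> = ?u t"
    proof -
      have e1: "al - p = al + (- p)" by simp
      have "t powr al * t powr (- p) = t powr (al - p)" by (simp only: e1 powr_add)
      moreover have "t\<^sup>2 * t powr (- p) = t powr (2 - p)"
      proof -
        have "t\<^sup>2 = t powr 2" using t by (simp add: powr_numeral)
        moreover have e2: "2 - p = 2 + (- p)" by simp
        ultimately show ?thesis by (simp only: e2 powr_add)
      qed
      ultimately show ?thesis unfolding a_def by (simp add: algebra_simps)
    qed
    finally show "0 \<le> F t \<and> F t \<le> ?u t" unfolding F_def using g_nn[of t] by simp
  qed
  have "(F \<longlongrightarrow> 0) (at_right 0)"
    by (rule tendsto_sandwich[OF _ _ tendsto_const u]) (use ev in \<open>auto elim: eventually_mono\<close>)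
  thus ?thesis by (simp add: zero_ereal_def ereal_tendsto_simps)
qed

lemma F_limInf: "((F \<circ> real_of_ereal) \<longlongrightarrow> 0) (at_left \<infinity>)"
proof -
  have "(F \<longlongrightarrow> 0) at_top"
  proof (rule Lim_null_comparison)
    show "\<forall>\<^sub>F t in at_top. norm (F t) \<le> 2 * t powr (- p)"
    proof (rule eventually_mono[OF eventually_gt_at_top[of 0]])
      fix t :: real assume "0 < t"
      show "norm (F t) \<le> 2 * t powr (- p)" unfolding F_def using g_nn[of t] g_le2[of t]
        by (simp add: abs_mult mult_right_mono)
    qed
    show "((\<lambda>t. 2 * t powr (- p)) \<longlongrightarrow> 0) at_top"
      using tendsto_mult_right_zero[OF tendsto_neg_powr[OF _ filterlim_ident, of "- p"]] p_bounds by simp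
  qed
  thus ?thesis by (simp add: ereal_tendsto_simps)
qed

lemma ibp: "(LBINT t:{0<..}. G t) = (1/p) * (LBINT t:{0<..}. Hc t)"
proof -
  define f where "f t = Hc t - p * G t" for t
  have fint: "set_integrable lborel {0<..} f"
    unfolding f_def[abs_def] using Hc_int int_all by (intro set_integral_diff set_integrable_mult_right) auto
  have eint: "einterval 0 \<infinity> = {0::real<..}" by (auto simp: einterval_iff)
  have "(LBINT t=0..\<infinity>. f t) = 0 - 0"
  proof (rule interval_integral_FTC_integrable[where F=F])
    fix t :: real assume "0 < ereal t" "ereal t < \<infinity>"
    hence t: "0 < t" by simp
    show "(F has_vector_derivative f t) (at t)"
      using F_deriv[OF t] gd_Hc[OF t] unfolding f_def by (simp add: has_real_derivative_iff_has_vector_derivative[symmetric])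
    have "isCont (\<lambda>t. gd t * t powr (- p) - p * G t) t"
      unfolding G_def using isCont_basic[OF t] t by (intro continuous_intros) auto
    moreover have "\<forall>\<^sub>F x in nhds t. gd x * x powr (- p) - p * G x = f x"
      using eventually_nhds_in_open[of "{0<..}" t] t
      by (auto elim!: eventually_mono simp: f_def gd_Hc)
    ultimately show "isCont f t" by (rule isCont_cong[THEN iffD1, rotated])
  next
    show "set_integrable lborel (einterval 0 \<infinity>) f" using fint eint by simp
  qed (auto intro: F_lim0 F_limInf)
  hence "(LBINT t:{0<..}. f t) = 0" by (simp add: interval_lebesgue_integral_0_infty)
  moreover have "(LBINT t:{0<..}. f t) = (LBINT t:{0<..}. Hc t) - p * (LBINT t:{0<..}. G t)"
    unfolding f_def using Hc_int int_all by (simp add: set_integral_diff set_integrable_mult_right)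
  ultimately show ?thesis using p_bounds by (simp add: field_simps)
qed

end


lemma moment_tonelli:
  fixes M :: "'a measure" and Y :: "'a \<Rightarrow> real" and p :: real
  assumes P: "prob_space M" and Ym[measurable]: "Y \<in> borel_measurable M"
  shows "(\<integral>\<^sup>+x. ennreal (\<bar>Y x\<bar> powr p) \<partial>M) * Kinf p
       = (\<integral>\<^sup>+t. ennreal (indicator {0<..} t * ((1 - (LINT x|M. cos (t * Y x))) * t powr (- p - 1))) \<partial>lborel)"
proof -
  interpret prob_space M by (rule P)
  interpret PS: pair_sigma_finite M lborel by unfold_locales
  have "(\<integral>\<^sup>+x. ennreal (\<bar>Y x\<bar> powr p) \<partial>M) * Kinf p = (\<integral>\<^sup>+x. ennreal (\<bar>Y x\<bar> powr p) * Kinf p \<partial>M)"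
    unfolding Kinf_def by (rule nn_integral_multc[symmetric]) simp
  also have "\<dots> = (\<integral>\<^sup>+x. \<integral>\<^sup>+t. ennreal (indicator {0<..} t * ((1 - cos (t * Y x)) * t powr (- p - 1))) \<partial>lborel \<partial>M)"
    by (simp add: scale_cos)
  also have "\<dots> = (\<integral>\<^sup>+t. \<integral>\<^sup>+x. ennreal (indicator {0<..} t * ((1 - cos (t * Y x)) * t powr (- p - 1))) \<partial>M \<partial>lborel)"
    by (rule PS.Fubini'[symmetric]) measurable
  also have "\<dots> = (\<integral>\<^sup>+t. ennreal (indicator {0<..} t * ((1 - (LINT x|M. cos (t * Y x))) * t powr (- p - 1))) \<partial>lborel)"
  proof (intro nn_integral_cong)
    fix t :: real
    have ci: "integrable M (\<lambda>x. 1 - cos (t * Y x))"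
      by (rule integrable_const_bound[where B=2]) (auto intro!: AE_I2 simp: abs_le_iff)
    have "(\<integral>\<^sup>+x. ennreal (indicator {0<..} t * ((1 - cos (t * Y x)) * t powr (- p - 1))) \<partial>M)
        = (\<integral>\<^sup>+x. ennreal (indicator {0<..} t * t powr (- p - 1)) * ennreal (1 - cos (t * Y x)) \<partial>M)"
      by (intro nn_integral_cong) (auto simp: indicator_def ennreal_mult'[symmetric] mult_ac)
    also have "\<dots> = ennreal (indicator {0<..} t * t powr (- p - 1)) * (\<integral>\<^sup>+x. ennreal (1 - cos (t * Y x)) \<partial>M)"
      by (rule nn_integral_cmult) simp
    also have "(\<integral>\<^sup>+x. ennreal (1 - cos (t * Y x)) \<partial>M) = ennreal (LINT x|M. 1 - cos (t * Y x))"
      by (rule nn_integral_eq_integral[OF ci]) simp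
    also have "(LINT x|M. 1 - cos (t * Y x)) = 1 - (LINT x|M. cos (t * Y x))"
    proof -
      have "(LINT x|M. 1 - cos (t * Y x)) = (LINT x|M. 1) - (LINT x|M. cos (t * Y x))"
        by (rule Bochner_Integration.integral_diff) (auto intro!: integrable_const_bound[where B=1] AE_I2)
      thus ?thesis by (simp add: prob_space)
    qed
    also have "ennreal (indicator {0<..} t * t powr (- p - 1)) * ennreal (1 - (LINT x|M. cos (t * Y x)))
        = ennreal (indicator {0<..} t * ((1 - (LINT x|M. cos (t * Y x))) * t powr (- p - 1)))"
    proof -
      have "0 \<le> 1 - (LINT x|M. cos (t * Y x))"
      proof -
        have "(LINT x|M. cos (t * Y x)) \<le> (LINT x|M. 1)"
          by (intro integral_mono) (auto intro!: integrable_const_bound[where B=1] AE_I2)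
        thus ?thesis by (simp add: prob_space)
      qed
      thus ?thesis by (simp add: ennreal_mult'[symmetric] mult_ac indicator_def)
    qed
    finally show "(\<integral>\<^sup>+x. ennreal (indicator {0<..} t * ((1 - cos (t * Y x)) * t powr (- p - 1))) \<partial>M)
        = ennreal (indicator {0<..} t * ((1 - (LINT x|M. cos (t * Y x))) * t powr (- p - 1)))" .
  qed
  finally show ?thesis .
qed

context GS begin

lemma char_cos:
  fixes M :: "'b measure" and X :: "'b \<Rightarrow> real"
  assumes P: "prob_space M" and Xm[measurable]: "X \<in> borel_measurable M"
    and ch: "char (distr M borel X) t = inverse (1 + complex_of_real (s * \<bar>t\<bar> powr al) * (1 - \<i> * complex_of_real (th * sgn t)))"
    and t: "0 < t"
  shows "(LINT x|M. cos (t * (X x - mu))) = N t / D t"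
proof -
  interpret prob_space M by (rule P)
  have ii: "complex_integrable M (\<lambda>x. iexp (t * X x))"
    by (rule integrable_const_bound[where B=1]) (auto intro!: AE_I2 simp: norm_exp_i_times)
  have c1: "char (distr M borel X) t = (CLINT x|M. iexp (t * X x))"
    unfolding char_def by (subst integral_distr) auto
  have "(LINT x|M. cos (t * (X x - mu))) = (LINT x|M. Re (iexp (- (t * mu)) * iexp (t * X x)))"
    by (intro Bochner_Integration.integral_cong) (auto simp: exp_diff[symmetric] Re_exp algebra_simps simp flip: exp_add)
  also have "\<dots> = Re (CLINT x|M. iexp (- (t * mu)) * iexp (t * X x))"
    using ii by (intro integral_Re) auto
  also have "\<dots> = Re (iexp (- (t * mu)) * char (distr M borel X) t)"
    unfolding c1 by simp
  also have "\<dots> = N t / D t"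
  proof -
    define z where "z = 1 + complex_of_real (s * t powr al) * (1 - \<i> * complex_of_real th)"
    define w where "w = iexp (- (t * mu))"
    have chz: "char (distr M borel X) t = inverse z" unfolding ch z_def using t by simp
    have zre: "Re z = A t" unfolding z_def A_def a_def by simp
    have zim: "Im z = - B t" unfolding z_def B_def a_def by simp
    have zn: "(Re z)\<^sup>2 + (Im z)\<^sup>2 = D t" unfolding zre zim D_def by simp
    have ri: "Re (inverse z) = A t / D t" using zre zn by simp
    have ii: "Im (inverse z) = B t / D t" using zim zn by simp
    have rw: "Re w = cos (mu * t)" "Im w = - sin (mu * t)" unfolding w_def by (simp_all add: Re_exp Im_exp mult.commute)
    have "Re (w * inverse z) = Re w * Re (inverse z) - Im w * Im (inverse z)" by simp
    also have "\<dots> = N t / D t" unfolding ri ii rw N_def by (simp add: add_divide_distrib mult.commute)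
    finally show ?thesis unfolding chz w_def .
  qed
  finally show ?thesis .
qed

end


lemma ennreal_solve:
  assumes "(X::ennreal) * ennreal k = ennreal v" "0 < k" "0 \<le> v"
  shows "X = ennreal (v / k)"
proof -
  have "X = X * ennreal k * ennreal (1 / k)"
    using assms(2) by (simp add: mult.assoc ennreal_mult'[symmetric])
  also have "\<dots> = ennreal (v / k)" using assms by (simp add: ennreal_mult'[symmetric] divide_inverse)
  finally show ?thesis .
qed

context GS begin

definition "Cc = lam / (sin (lam * pi / 2) * Gamma (1 - lam))"

lemma main_mu:
  fixes M :: "'b measure" and X :: "'b \<Rightarrow> real"
  assumes P: "prob_space M" and Xm[measurable]: "X \<in> borel_measurable M"
    and ch: "\<And>t. 0 < t \<Longrightarrow> char (distr M borel X) t = inverse (1 + complex_of_real (s * \<bar>t\<bar> powr al) * (1 - \<i> * complex_of_real (th * sgn t)))"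
  shows "integrable M (\<lambda>x. \<bar>X x - mu\<bar> powr p)"
    and "(LINT x|M. \<bar>X x - mu\<bar> powr p) = Cc * (LBINT t:{0<..}. Hc t)"
proof -
  interpret prob_space M by (rule P)
  have K: "Kinf p = ennreal (K0 p)" using p_bounds by (intro Kinf_K0) auto
  have Kp: "0 < K0 p" using p_bounds by (intro K0_pos) auto
  have Gnn: "\<And>t. 0 \<le> indicator {0<..} t * G t" unfolding G_def using g_nn by (simp add: indicator_def)
  have "(\<integral>\<^sup>+x. ennreal (\<bar>X x - mu\<bar> powr p) \<partial>M) * Kinf p
      = (\<integral>\<^sup>+t. ennreal (indicator {0<..} t * ((1 - (LINT x|M. cos (t * (X x - mu)))) * t powr (- p - 1))) \<partial>lborel)"
    by (rule moment_tonelli[OF P]) simp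
  also have "\<dots> = (\<integral>\<^sup>+t. ennreal (indicator {0<..} t * G t) \<partial>lborel)"
  proof (intro nn_integral_cong)
    fix t :: real
    show "ennreal (indicator {0<..} t * ((1 - (LINT x|M. cos (t * (X x - mu)))) * t powr (- p - 1)))
        = ennreal (indicator {0<..} t * G t)"
    proof (cases "0 < t")
      case True
      thus ?thesis using char_cos[OF P Xm ch[OF True] True] by (simp add: G_def g_def)
    qed (simp add: indicator_def)
  qed
  also have "\<dots> = ennreal (LBINT t:{0<..}. G t)"
    using int_all(1) Gnn unfolding set_integrable_def set_lebesgue_integral_def
    by (subst nn_integral_eq_integral[symmetric]) auto
  finally have eq: "(\<integral>\<^sup>+x. ennreal (\<bar>X x - mu\<bar> powr p) \<partial>M) * ennreal (K0 p) = ennreal (LBINT t:{0<..}. G t)"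
    unfolding K .
  have Gi: "0 \<le> (LBINT t:{0<..}. G t)"
    using Gnn unfolding set_lebesgue_integral_def by (intro integral_nonneg_AE) (auto simp: mult.commute)
  have nn: "(\<integral>\<^sup>+x. ennreal (\<bar>X x - mu\<bar> powr p) \<partial>M) = ennreal ((LBINT t:{0<..}. G t) / K0 p)"
    by (rule ennreal_solve[OF eq Kp Gi])
  show int: "integrable M (\<lambda>x. \<bar>X x - mu\<bar> powr p)"
    by (rule integrableI_nonneg) (auto simp: nn)
  have "ennreal (LINT x|M. \<bar>X x - mu\<bar> powr p) = ennreal ((LBINT t:{0<..}. G t) / K0 p)"
    using nn_integral_eq_integral[OF int] nn by simp
  hence "(LINT x|M. \<bar>X x - mu\<bar> powr p) = (LBINT t:{0<..}. G t) / K0 p"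
    using Gi Kp by (subst (asm) ennreal_inj) auto
  also have "\<dots> = (1 / (p * K0 p)) * (LBINT t:{0<..}. Hc t)"
    unfolding ibp using Kp p_bounds by (simp add: field_simps)
  also have "1 / (p * K0 p) = Cc"
    unfolding Cc_def p_def using lam0 lam1 al2 by (intro K0_C) auto
  finally show "(LINT x|M. \<bar>X x - mu\<bar> powr p) = Cc * (LBINT t:{0<..}. Hc t)" .
qed

lemma Hc_split: "(LBINT t:{0<..}. Hc t) = mu * (LBINT t:{0<..}. T1 t) - al * s * (LBINT t:{0<..}. T2 t) + 2 * al * s * (LBINT t:{0<..}. T3 t)"
  unfolding Hc_def using int_all by (simp add: set_integral_add set_integral_diff set_integrable_mult_right)

end


lemma cont_meas:
  fixes f :: "real \<Rightarrow> real"
  assumes "continuous_on {0<..} f"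
  shows "set_borel_measurable lborel {0<..} f"
proof -
  have "(\<lambda>x. indicator {0<..} x *\<^sub>R f x) \<in> borel_measurable borel"
    using assms by (intro borel_measurable_continuous_on_indicator) auto
  thus ?thesis unfolding set_borel_measurable_def by (simp add: measurable_cong_sets[OF sets_lborel refl])
qed

lemma set_integrable_lebesgue_lborel:
  fixes f :: "real \<Rightarrow> real"
  assumes "f absolutely_integrable_on {0<..}" "continuous_on {0<..} f"
  shows "set_integrable lborel {0<..} f"
proof -
  have m: "(\<lambda>x. indicator {0<..} x *\<^sub>R f x) \<in> borel_measurable lborel"
    using cont_meas[OF assms(2)] unfolding set_borel_measurable_def .
  show ?thesis using assms(1) m unfolding absolutely_integrable_on_def set_integrable_def
    by (simp add: integrable_completion)
qed

context GS begin

definition "Rf v = ((1 + v)\<^sup>2 + (th * v)\<^sup>2 + 2 * th\<^sup>2 * v) / ((1 + v)\<^sup>2 + (th * v)\<^sup>2)\<^sup>2"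
definition "f0 v = v powr (- (1 + lam) / al) * Rf v"

lemma Rden_pos: "0 \<le> v \<Longrightarrow> 0 < (1 + v)\<^sup>2 + (th * v)\<^sup>2"
  by (intro add_pos_nonneg) auto

lemma Hc_mu0:
  assumes "mu = 0" "0 < t"
  shows "Hc t = al * s * t powr e0 * Rf (a t)"
proof -
  have Dp: "0 < D t" by (rule D_pos)
  have D': "D t = (1 + a t)\<^sup>2 + (th * a t)\<^sup>2" unfolding D_def A_def B_def ..
  have "2 * (A t * (A t + th * B t)) - D t = (1 + a t)\<^sup>2 + (th * a t)\<^sup>2 + 2 * th\<^sup>2 * a t"
    unfolding D_def A_def B_def by (simp add: power2_eq_square algebra_simps)
  hence R: "Rf (a t) = (2 * (A t * (A t + th * B t)) - D t) / (D t)\<^sup>2"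
    unfolding Rf_def D' by simp
  have "Hc t = al * s * t powr e0 * (2 * (A t * (A t + th * B t)) / (D t)\<^sup>2 - 1 / D t)"
    unfolding Hc_def T1_def T2_def T3_def N_def e0_def using assms(1) by (simp add: algebra_simps)
  also have "2 * (A t * (A t + th * B t)) / (D t)\<^sup>2 - 1 / D t = Rf (a t)"
    unfolding R using Dp by (simp add: field_simps power2_eq_square)
  finally show ?thesis .
qed

lemma second_formula:
  assumes mu0: "mu = 0" and sg: "0 < sg" and s_eq: "s = sg powr al"
  shows "set_integrable lborel {0<..} f0"
    and "(LBINT t:{0<..}. Hc t) = sg powr p * (LBINT v:{0<..}. f0 v)"
proof -
  define gg where "gg t = s * t powr al" for t
  define gg' where "gg' t = s * (al * t powr (al - 1))" for t
  define b where "b = sg powr (- p) * (LBINT t:{0<..}. Hc t)"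
  have al0: "0 < al" using al1 by simp
  have pt: "\<And>t. 0 < t \<Longrightarrow> \<bar>gg' t\<bar> * f0 (gg t) = sg powr (- p) * Hc t"
  proof -
    fix t :: real assume t: "0 < t"
    have "(gg t) powr (- (1 + lam) / al) = s powr (- p / al) * t powr (- p)"
      unfolding gg_def p_def using t s0 al0 by (simp add: powr_mult powr_powr)
    also have "s powr (- p / al) = sg powr (- p)"
      unfolding s_eq using sg al0 by (simp add: powr_powr)
    finally have e1: "(gg t) powr (- (1 + lam) / al) = sg powr (- p) * t powr (- p)" .
    have e2: "t powr (al - 1) * t powr (- p) = t powr e0"
    proof -
      have "e0 = (al - 1) + (- p)" unfolding e0_def p_def by simp
      thus ?thesis by (simp only: powr_add)
    qed
    have "\<bar>gg' t\<bar> * f0 (gg t) = s * al * (t powr (al - 1) * t powr (- p)) * sg powr (- p) * Rf (a t)"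
      unfolding f0_def e1 gg'_def using s0 al0 t by (simp add: abs_mult a_def gg_def[symmetric])
    also have "\<dots> = sg powr (- p) * Hc t" unfolding e2 Hc_mu0[OF mu0 t] by simp
    finally show "\<bar>gg' t\<bar> * f0 (gg t) = sg powr (- p) * Hc t" .
  qed
  have hint: "set_integrable lborel {0<..} (\<lambda>t. \<bar>gg' t\<bar> * f0 (gg t))"
  proof -
    have "set_integrable lborel {0<..} (\<lambda>t. sg powr (- p) * Hc t)"
      using Hc_int by (rule set_integrable_mult_right)
    moreover have "set_integrable lborel {0<..} (\<lambda>t. \<bar>gg' t\<bar> * f0 (gg t)) = set_integrable lborel {0<..} (\<lambda>t. sg powr (- p) * Hc t)"
      by (rule set_integrable_cong) (auto simp: pt)
    ultimately show ?thesis by simp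
  qed
  have hval: "(LBINT t:{0<..}. \<bar>gg' t\<bar> * f0 (gg t)) = b"
  proof -
    have "(LBINT t:{0<..}. \<bar>gg' t\<bar> * f0 (gg t)) = (LBINT t:{0<..}. sg powr (- p) * Hc t)"
      by (rule set_lebesgue_integral_cong) (auto simp: pt)
    thus ?thesis unfolding b_def by simp
  qed
  have habs: "(\<lambda>t. \<bar>gg' t\<bar> * f0 (gg t)) absolutely_integrable_on {0<..} \<and> integral {0<..} (\<lambda>t. \<bar>gg' t\<bar> * f0 (gg t)) = b"
  proof
    show "(\<lambda>t. \<bar>gg' t\<bar> * f0 (gg t)) absolutely_integrable_on {0<..}"
      using hint unfolding absolutely_integrable_on_def set_integrable_def
      by (subst integrable_completion) (auto dest: borel_measurable_integrable)
    show "integral {0<..} (\<lambda>t. \<bar>gg' t\<bar> * f0 (gg t)) = b"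
      using set_borel_integral_eq_integral(2)[OF hint] hval by simp
  qed
  have img: "gg ` {0<..} = {0<..}"
  proof (intro equalityI subsetI)
    fix v :: real assume "v \<in> {0<..}"
    hence v: "0 < v" by simp
    have "gg ((v / s) powr (1 / al)) = v"
      unfolding gg_def using v s0 al0 by (simp add: powr_powr)
    moreover have "(v / s) powr (1 / al) \<in> {0<..}" using v s0 by simp
    ultimately show "v \<in> gg ` {0<..}" by (metis image_eqI)
  next
    fix v assume "v \<in> gg ` {0<..}"
    thus "v \<in> {0<..}" unfolding gg_def using s0 by auto
  qed
  have inj: "inj_on gg {0<..}"
  proof (rule inj_onI)
    fix x y :: real assume x: "x \<in> {0<..}" and y: "y \<in> {0<..}" and e: "gg x = gg y"
    hence "x powr al = y powr al" unfolding gg_def using s0 by simp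
    hence "(x powr al) powr (1 / al) = (y powr al) powr (1 / al)" by simp
    thus "x = y" using x y al0 by (simp add: powr_powr)
  qed
  have der: "\<And>x. x \<in> {0<..} \<Longrightarrow> (gg has_real_derivative gg' x) (at x within {0<..})"
    unfolding gg_def gg'_def by (auto intro!: derivative_eq_intros)
  have fabs: "f0 absolutely_integrable_on {0<..} \<and> integral {0<..} f0 = b"
    using habs has_absolute_integral_change_of_variables_1'[OF _ der inj, of f0 b] img by simp
  have cf0: "continuous_on {0<..} f0"
  proof -
    have "\<forall>v\<in>{0<..}. ((1 + v)\<^sup>2 + (th * v)\<^sup>2)\<^sup>2 \<noteq> 0" using Rden_pos by auto
    thus ?thesis unfolding f0_def Rf_def by (intro continuous_intros) auto
  qed
  show fi: "set_integrable lborel {0<..} f0"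
    using fabs cf0 by (intro set_integrable_lebesgue_lborel) auto
  have "(LBINT v:{0<..}. f0 v) = b"
    using set_borel_integral_eq_integral(2)[OF fi] fabs by simp
  thus "(LBINT t:{0<..}. Hc t) = sg powr p * (LBINT v:{0<..}. f0 v)"
    unfolding b_def using sg by (simp add: powr_minus field_simps)
qed

end


theorem lemma2p3:
  fixes M :: "'a measure" and X :: "'a \<Rightarrow> real"
    and \<alpha> \<beta> \<sigma> lam :: real
  assumes "prob_space M"
    and "X \<in> borel_measurable M"
    and "1 < \<alpha>" "\<alpha> < 2" "\<bar>\<beta>\<bar> \<le> 1" "0 < \<sigma>"
    and charX: "\<And>t. char (distr M borel X) t =
        inverse (1 + complex_of_real (\<sigma> powr \<alpha> * \<bar>t\<bar> powr \<alpha>)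
                    * (1 - \<i> * complex_of_real (\<beta> * tan (pi * \<alpha> / 2) * sgn t)))"
    and "0 < lam" "lam < \<alpha> - 1"
  shows "let \<theta> = \<beta> * tan (pi * \<alpha> / 2);
             s = \<sigma> powr \<alpha>;
             D = (\<lambda>u. (1 + s * u powr \<alpha>)\<^sup>2 + (\<theta> * s * u powr \<alpha>)\<^sup>2);
             C = lam / (sin (lam * pi / 2) * Gamma (1 - lam))
         in (\<forall>\<mu>::real.
               integrable M (\<lambda>x. \<bar>X x - \<mu>\<bar> powr (1 + lam)) \<and>
               (LINT x|M. \<bar>X x - \<mu>\<bar> powr (1 + lam)) =
                 C * ( \<mu> * (LBINT u=0..\<infinity>. u powr (-(1 + lam)) *
                          (((1 + s * u powr \<alpha>) * sin (\<mu> * u) - \<theta> * s * u powr \<alpha> * cos (\<mu> * u)) / D u))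
                     - \<alpha> * s * (LBINT u=0..\<infinity>. u powr (\<alpha> - lam - 2) *
                          ((cos (\<mu> * u) + \<theta> * sin (\<mu> * u)) / D u))
                     + 2 * \<alpha> * s * (LBINT u=0..\<infinity>. u powr (\<alpha> - lam - 2) *
                          (((1 + s * u powr \<alpha>) * cos (\<mu> * u) + \<theta> * s * u powr \<alpha> * sin (\<mu> * u))
                           * (1 + s * u powr \<alpha> + \<theta>\<^sup>2 * s * u powr \<alpha>) / (D u)\<^sup>2))))
            \<and> integrable M (\<lambda>x. \<bar>X x\<bar> powr (1 + lam))
            \<and> (LINT x|M. \<bar>X x\<bar> powr (1 + lam)) =
                C * \<sigma> powr (1 + lam) * (LBINT v=0..\<infinity>. v powr (-(1 + lam) / \<alpha>) *
                  (((1 + v)\<^sup>2 + (\<theta> * v)\<^sup>2 + 2 * \<theta>\<^sup>2 * v) / ((1 + v)\<^sup>2 + (\<theta> * v)\<^sup>2)\<^sup>2))"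
proof -
  define th where "th = \<beta> * tan (pi * \<alpha> / 2)"
  define s where "s = \<sigma> powr \<alpha>"
  have s0: "0 < s" unfolding s_def using assms(6) by simp
  have ch: "\<And>t. 0 < t \<Longrightarrow> char (distr M borel X) t = inverse (1 + complex_of_real (s * \<bar>t\<bar> powr \<alpha>) * (1 - \<i> * complex_of_real (th * sgn t)))"
    unfolding s_def th_def using charX by simp
  have GSi: "GS \<alpha> s lam"
    using assms(3,4,8,9) s0 by unfold_locales auto
  have part1: "\<forall>\<mu>::real.
               integrable M (\<lambda>x. \<bar>X x - \<mu>\<bar> powr (1 + lam)) \<and>
               (LINT x|M. \<bar>X x - \<mu>\<bar> powr (1 + lam)) =
                 (lam / (sin (lam * pi / 2) * Gamma (1 - lam))) * ( \<mu> * (LBINT u=0..\<infinity>. u powr (-(1 + lam)) *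
                          (((1 + s * u powr \<alpha>) * sin (\<mu> * u) - th * s * u powr \<alpha> * cos (\<mu> * u)) / ((1 + s * u powr \<alpha>)\<^sup>2 + (th * s * u powr \<alpha>)\<^sup>2)))
                     - \<alpha> * s * (LBINT u=0..\<infinity>. u powr (\<alpha> - lam - 2) *
                          ((cos (\<mu> * u) + th * sin (\<mu> * u)) / ((1 + s * u powr \<alpha>)\<^sup>2 + (th * s * u powr \<alpha>)\<^sup>2)))
                     + 2 * \<alpha> * s * (LBINT u=0..\<infinity>. u powr (\<alpha> - lam - 2) *
                          (((1 + s * u powr \<alpha>) * cos (\<mu> * u) + th * s * u powr \<alpha> * sin (\<mu> * u))
                           * (1 + s * u powr \<alpha> + th\<^sup>2 * s * u powr \<alpha>) / ((1 + s * u powr \<alpha>)\<^sup>2 + (th * s * u powr \<alpha>)\<^sup>2)\<^sup>2)))"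
  proof
    fix \<mu> :: real
    interpret G: GS \<alpha> th s \<mu> lam by (rule GSi)
    have e1: "(\<lambda>u. u powr (-(1 + lam)) *
                          (((1 + s * u powr \<alpha>) * sin (\<mu> * u) - th * s * u powr \<alpha> * cos (\<mu> * u)) / ((1 + s * u powr \<alpha>)\<^sup>2 + (th * s * u powr \<alpha>)\<^sup>2))) = G.T1"
      by (rule ext) (simp add: G.T1_def G.A_def G.B_def G.D_def G.a_def mult.assoc)
    have e2: "(\<lambda>u. u powr (\<alpha> - lam - 2) *
                          ((cos (\<mu> * u) + th * sin (\<mu> * u)) / ((1 + s * u powr \<alpha>)\<^sup>2 + (th * s * u powr \<alpha>)\<^sup>2))) = G.T2"
      by (rule ext) (simp add: G.T2_def G.A_def G.B_def G.D_def G.a_def mult.assoc)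
    have e3: "(\<lambda>u. u powr (\<alpha> - lam - 2) *
                          (((1 + s * u powr \<alpha>) * cos (\<mu> * u) + th * s * u powr \<alpha> * sin (\<mu> * u))
                           * (1 + s * u powr \<alpha> + th\<^sup>2 * s * u powr \<alpha>) / ((1 + s * u powr \<alpha>)\<^sup>2 + (th * s * u powr \<alpha>)\<^sup>2)\<^sup>2)) = G.T3"
      by (rule ext) (simp add: G.T3_def G.N_def G.A_def G.B_def G.D_def G.a_def mult.assoc power2_eq_square)
    show "integrable M (\<lambda>x. \<bar>X x - \<mu>\<bar> powr (1 + lam)) \<and>
               (LINT x|M. \<bar>X x - \<mu>\<bar> powr (1 + lam)) =
                 (lam / (sin (lam * pi / 2) * Gamma (1 - lam))) * ( \<mu> * (LBINT u=0..\<infinity>. u powr (-(1 + lam)) *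
                          (((1 + s * u powr \<alpha>) * sin (\<mu> * u) - th * s * u powr \<alpha> * cos (\<mu> * u)) / ((1 + s * u powr \<alpha>)\<^sup>2 + (th * s * u powr \<alpha>)\<^sup>2)))
                     - \<alpha> * s * (LBINT u=0..\<infinity>. u powr (\<alpha> - lam - 2) *
                          ((cos (\<mu> * u) + th * sin (\<mu> * u)) / ((1 + s * u powr \<alpha>)\<^sup>2 + (th * s * u powr \<alpha>)\<^sup>2)))
                     + 2 * \<alpha> * s * (LBINT u=0..\<infinity>. u powr (\<alpha> - lam - 2) *
                          (((1 + s * u powr \<alpha>) * cos (\<mu> * u) + th * s * u powr \<alpha> * sin (\<mu> * u))
                           * (1 + s * u powr \<alpha> + th\<^sup>2 * s * u powr \<alpha>) / ((1 + s * u powr \<alpha>)\<^sup>2 + (th * s * u powr \<alpha>)\<^sup>2)\<^sup>2)))"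
      unfolding e1 e2 e3 interval_lebesgue_integral_0_infty
      using G.main_mu[OF assms(1,2) ch] G.Hc_split unfolding G.p_def G.Cc_def by simp
  qed
  interpret G0: GS \<alpha> th s 0 lam by (rule GSi)
  have m0: "integrable M (\<lambda>x. \<bar>X x\<bar> powr (1 + lam))" "(LINT x|M. \<bar>X x\<bar> powr (1 + lam)) = G0.Cc * (LBINT t:{0<..}. G0.Hc t)"
    using G0.main_mu[OF assms(1,2) ch] unfolding G0.p_def by simp_all
  have sf: "(LBINT t:{0<..}. G0.Hc t) = \<sigma> powr (1 + lam) * (LBINT v:{0<..}. G0.f0 v)"
    using G0.second_formula(2)[OF refl assms(6) s_def] unfolding G0.p_def .
  have e4: "(\<lambda>v. v powr (-(1 + lam) / \<alpha>) *
                  (((1 + v)\<^sup>2 + (th * v)\<^sup>2 + 2 * th\<^sup>2 * v) / ((1 + v)\<^sup>2 + (th * v)\<^sup>2)\<^sup>2)) = G0.f0"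
    by (rule ext) (simp add: G0.f0_def G0.Rf_def)
  have part2: "(LINT x|M. \<bar>X x\<bar> powr (1 + lam)) =
                (lam / (sin (lam * pi / 2) * Gamma (1 - lam))) * \<sigma> powr (1 + lam) * (LBINT v=0..\<infinity>. v powr (-(1 + lam) / \<alpha>) *
                  (((1 + v)\<^sup>2 + (th * v)\<^sup>2 + 2 * th\<^sup>2 * v) / ((1 + v)\<^sup>2 + (th * v)\<^sup>2)\<^sup>2))"
    unfolding e4 interval_lebesgue_integral_0_infty m0(2) sf G0.Cc_def by (simp add: mult.assoc)
  show ?thesis
    unfolding Let_def th_def[symmetric] s_def[symmetric] using part1 m0(1) part2 by blast
qed


end
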